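(* Let $p$ be a prime. (1) The filtration $(F_iA_{(p)*})_{i\in\mathbb Z}$ on $A_{(p)*}$ satisfies conditions (E1* )–(E6* ). (2) $\rho_p(F_iA_{(p)*})=F_i\mathcal A_{p*}$ for all $i\in\mathbb Z$.
   Context: For $p$ odd, $A_{(p)*}=E(x_{i1}\mid i\ge2)\otimes\mathbb F_p[x_{ij}\mid i>j\ge2]$ with $\deg x_{i1}=2p^{i-2}-1$ and $\deg x_{ij}=2p^{j-2}(p^{i-j}-1)$ for $i>j\ge2$; for $p=2$, $A_{(2)*}=\mathbb F_2[x_{ij}\mid i>j\ge1]$ with $\deg x_{ij}=2^{j-1}(2^{i-j}-1)$. It is a commutative graded Hopf algebra with coproduct $\mu^*(x_{ij})=x_{ij}\otimes1+\sum_{k=j+1}^{i-1}x_{ik}\otimes x_{kj}+1\otimes x_{ij}$ and counit $x_{ij}\mapsto0$. For $p$ odd, $F_iA_{(p)*}$ is the span of monomials $x_{k_11}\cdots x_{k_m1}x_{i_1j_1}\cdots x_{i_nj_n}$ with $j_1,\dots,j_n\ge2$ and $m+2\sum_{l=1}^np^{j_l-2}\le i$; for $p=2$, $F_iA_{(2)*}$ is the span of monomials $x_{i_1j_1}\cdots x_{i_nj_n}$ with $\sum_{l=1}^n2^{j_l-1}\le i$ (so $F_iA_{(p)*}=0$ for $i<0$). For a graded Hopf algebra $A_*$ with product $\delta^*$, coproduct $\mu^*$ and increasing filtration $(F_iA_* )$, put $E_i^kA_*=(F_iA_* )_k/(F_{i-1}A_* )_k$ ($k$ the degree) and consider: (E1*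 ) $F_iA_*=0$ for $i<0$; (E2* ) $\bigcup_iF_iA_*=A_*$; (E3* ) $\mu^*(F_iA_* )\subset A_*\otimes F_iA_*$ for all $i$; (E4* ) $\mu^*(F_iA_k)\subset\sum_{j\in\mathbb Z}F_{j+i}A_{k-j}\otimes A_j$ for all $i,k$; (E5* ) $\delta^*(F_jA_*\otimes F_kA_* )\subset F_{j+k}A_*$; (E6* ) $E_{2i+\varepsilon}^kA_*=0$ ($i,k\in\mathbb Z$, $\varepsilon\in\{0,1\}$) whenever $k<2i(p-1)+\varepsilon$ or $2i+\varepsilon+k\not\equiv0,2\pmod{2p}$. $\mathcal A_{p*}$ is the dual Steenrod algebra, $=E(\tau_0,\tau_1,\dots)\otimes\mathbb F_p[\xi_1,\xi_2,\dots]$ for $p$ odd and $\mathbb F_2[\zeta_1,\zeta_2,\dots]$ for $p=2$ (Milnor generators, $\deg\tau_n=2p^n-1$, $\deg\xi_n=2p^n-2$, $\deg\zeta_n=2^n-1$, $\xi_0=\zeta_0=1$). The Hopf algebra map $\rho_p\colon A_{(p)*}\to\mathcal A_{p*}$ is given by $\rho_p(x_{i1})=-\tau_{i-2}$, $\rho_p(x_{ij})=\xi_{i-j}^{p^{j-2}}$ ($j\ge2$) for $p$ odd, and $\rho_2(x_{ij})=\zeta_{i-j}^{2^{j-1}}$. $F_i\mathcal A_{p*}$ is the filtration dual to the excess filtration of the Steenrod algebra; equivalently, $F_i\mathcal A_{p*}$ is spanned by the monomials $\tau_0^{\varepsilon_0}\tau_1^{\varepsilon_1}\cdots\xi_1^{r_1}\xi_2^{r_2}\cdots$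 with $\sum\varepsilon_k+2\sum r_k\le i$ ($p$ odd), resp. $\zeta_1^{r_1}\zeta_2^{r_2}\cdots$ with $\sum r_k\le i$ ($p=2$). *)

theory Defs
  imports Main "HOL-Library.Product_Lexorder" "HOL-Computational_Algebra.Primes"
begin

text \<open>Monomials in variables of type 'v are exponent functions 'v => nat (finitely many
nonzero exponents). An element of the algebra is a coefficient function on monomials
(finitely supported). Variables carry a parity (odd = exterior generator); the basis
monomial m denotes the ordered product of its variables in increasing order of 'v.\<close>

type_synonym ('v, 'k) salg = "('v \<Rightarrow> nat) \<Rightarrow> 'k"

definition supp :: "('m \<Rightarrow> 'k::zero) \<Rightarrow> 'm set" where
  "supp f = {m. f m \<noteq> 0}"

definition vars :: "('v \<Rightarrow> nat) \<Rightarrow> 'v set" where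
  "vars m = {v. m v \<noteq> 0}"

text \<open>Sign (Koszul rule) for multiplying basis monomial a by basis monomial b.\<close>
definition sgn_coeff :: "('v::linorder \<Rightarrow> bool) \<Rightarrow> ('v \<Rightarrow> nat) \<Rightarrow> ('v \<Rightarrow> nat) \<Rightarrow> 'k::comm_ring_1" where
  "sgn_coeff od a b =
     (if (\<exists>v. od v \<and> a v \<noteq> 0 \<and> b v \<noteq> 0) then 0
      else (- 1) ^ card {(u, v). od u \<and> od v \<and> a u \<noteq> 0 \<and> b v \<noteq> 0 \<and> v < u})"

definition smult :: "('v::linorder \<Rightarrow> bool) \<Rightarrow> ('v, 'k::comm_ring_1) salg \<Rightarrow> ('v, 'k) salg \<Rightarrow> ('v, 'k) salg" where
  "smult od f g = (\<lambda>m. \<Sum>(a, b) \<in> {(a, b). a \<in> supp f \<and> b \<in> supp g \<and> (\<lambda>v. a v + b v) = m}.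
                          sgn_coeff od a b * f a * g b)"

definition sone :: "('v, 'k::comm_ring_1) salg" where
  "sone = (\<lambda>m. if m = (\<lambda>_. 0) then 1 else 0)"

definition svar :: "'v \<Rightarrow> ('v, 'k::comm_ring_1) salg" where
  "svar v = (\<lambda>m. if m = (\<lambda>u. if u = v then 1 else 0) then 1 else 0)"

definition spow :: "('v::linorder \<Rightarrow> bool) \<Rightarrow> ('v, 'k::comm_ring_1) salg \<Rightarrow> nat \<Rightarrow> ('v, 'k) salg" where
  "spow od f n = ((smult od f) ^^ n) sone"

text \<open>Algebra homomorphism out of a free graded-commutative algebra, determined by the
images h of the generators: a basis monomial goes to the ordered product of the images.\<close>
definition smono_img :: "('w::linorder \<Rightarrow> bool) \<Rightarrow> ('v::linorder \<Rightarrow> ('w, 'k::comm_ring_1) salg)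
    \<Rightarrow> ('v \<Rightarrow> nat) \<Rightarrow> ('w, 'k) salg" where
  "smono_img od' h m =
     foldr (\<lambda>v acc. smult od' (spow od' (h v) (m v)) acc) (sorted_list_of_set (vars m)) sone"

definition sext :: "('w::linorder \<Rightarrow> bool) \<Rightarrow> ('v::linorder \<Rightarrow> ('w, 'k::comm_ring_1) salg)
    \<Rightarrow> ('v, 'k) salg \<Rightarrow> ('w, 'k) salg" where
  "sext od' h f = (\<lambda>m'. \<Sum>m \<in> supp f. f m * smono_img od' h m m')"

definition valid_mono :: "('v \<Rightarrow> bool) \<Rightarrow> ('v \<Rightarrow> bool) \<Rightarrow> ('v \<Rightarrow> nat) \<Rightarrow> bool" where
  "valid_mono V od m \<longleftrightarrow> finite (vars m) \<and> vars m \<subseteq> {v. V v} \<and> (\<forall>v. od v \<longrightarrow> m v \<le> 1)"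

definition salg_carrier :: "('v \<Rightarrow> bool) \<Rightarrow> ('v \<Rightarrow> bool) \<Rightarrow> ('v, 'k::zero) salg set" where
  "salg_carrier V od = {f. finite (supp f) \<and> (\<forall>m \<in> supp f. valid_mono V od m)}"

definition mono_sum :: "('v \<Rightarrow> int) \<Rightarrow> ('v \<Rightarrow> nat) \<Rightarrow> int" where
  "mono_sum w m = (\<Sum>v \<in> vars m. int (m v) * w v)"

definition homog :: "('v \<Rightarrow> int) \<Rightarrow> int \<Rightarrow> ('v, 'k::zero) salg \<Rightarrow> bool" where
  "homog deg k f \<longleftrightarrow> (\<forall>m \<in> supp f. mono_sum deg m = k)"

text \<open>Generator x_ij is the variable (i,j), with i > j >= 1.  For p odd the x_i1 are exterior.\<close>

type_synonym 'k Aelem = "(nat \<times> nat, 'k) salg"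

definition Avar :: "nat \<times> nat \<Rightarrow> bool" where
  "Avar v \<longleftrightarrow> 1 \<le> snd v \<and> snd v < fst v"

definition Aodd :: "nat \<Rightarrow> nat \<times> nat \<Rightarrow> bool" where
  "Aodd p v \<longleftrightarrow> odd p \<and> snd v = 1"

definition Adeg :: "nat \<Rightarrow> nat \<times> nat \<Rightarrow> int" where
  "Adeg p v = (case v of (i, j) \<Rightarrow>
     if odd p then (if j = 1 then 2 * int p ^ (i - 2) - 1 else 2 * int p ^ (j - 2) * (int p ^ (i - j) - 1))
     else 2 ^ (j - 1) * (2 ^ (i - j) - 1))"

definition Aweight :: "nat \<Rightarrow> nat \<times> nat \<Rightarrow> int" where
  "Aweight p v = (case v of (i, j) \<Rightarrow>
     if odd p then (if j = 1 then 1 else 2 * int p ^ (j - 2)) else 2 ^ (j - 1))"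

definition A_p :: "nat \<Rightarrow> 'k::comm_ring_1 Aelem set" where
  "A_p p = salg_carrier Avar (Aodd p)"

definition Amult :: "nat \<Rightarrow> 'k::comm_ring_1 Aelem \<Rightarrow> 'k Aelem \<Rightarrow> 'k Aelem" where
  "Amult p = smult (Aodd p)"

definition Fil_A :: "nat \<Rightarrow> int \<Rightarrow> 'k::comm_ring_1 Aelem set" where
  "Fil_A p i = {f \<in> A_p p. \<forall>m \<in> supp f. mono_sum (Aweight p) m \<le> i}"

text \<open>A_(p)* (x) A_(p)*: free graded-commutative algebra on two copies of the generators;
(False, v) is v (x) 1 and (True, v) is 1 (x) v (the left factor comes first, giving the
Koszul sign rule for the tensor product of graded-commutative algebras).\<close>

type_synonym 'k TAelem = "(bool \<times> (nat \<times> nat), 'k) salg"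

definition TAodd :: "nat \<Rightarrow> bool \<times> (nat \<times> nat) \<Rightarrow> bool" where
  "TAodd p v = Aodd p (snd v)"

definition tleft :: "(bool \<times> (nat \<times> nat) \<Rightarrow> nat) \<Rightarrow> (nat \<times> nat \<Rightarrow> nat)" where
  "tleft m = (\<lambda>v. m (False, v))"

definition tright :: "(bool \<times> (nat \<times> nat) \<Rightarrow> nat) \<Rightarrow> (nat \<times> nat \<Rightarrow> nat)" where
  "tright m = (\<lambda>v. m (True, v))"

definition TA_p :: "nat \<Rightarrow> 'k::comm_ring_1 TAelem set" where
  "TA_p p = {g. finite (supp g) \<and>
     (\<forall>m \<in> supp g. valid_mono Avar (Aodd p) (tleft m) \<and> valid_mono Avar (Aodd p) (tright m))}"

definition Acoprod_gen :: "nat \<Rightarrow> nat \<times> nat \<Rightarrow> 'k::comm_ring_1 TAelem" where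
  "Acoprod_gen p v = (case v of (i, j) \<Rightarrow>
     (\<lambda>m. svar (False, (i, j)) m
          + (\<Sum>k \<in> {j + 1..<i}. smult (TAodd p) (svar (False, (i, k))) (svar (True, (k, j))) m)
          + svar (True, (i, j)) m))"

definition Acoprod :: "nat \<Rightarrow> 'k::comm_ring_1 Aelem \<Rightarrow> 'k TAelem" where
  "Acoprod p = sext (TAodd p) (Acoprod_gen p)"

definition E1 :: "nat \<Rightarrow> (int \<Rightarrow> 'k::comm_ring_1 Aelem set) \<Rightarrow> bool" where
  "E1 p F \<longleftrightarrow> (\<forall>i < 0. F i = {(\<lambda>_. 0)})"

definition E2 :: "nat \<Rightarrow> (int \<Rightarrow> 'k::comm_ring_1 Aelem set) \<Rightarrow> bool" where
  "E2 p F \<longleftrightarrow> (\<Union>i. F i) = A_p p"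

text \<open>A (x) F_i A = span of the tensor monomials whose right factor has weight <= i.\<close>
definition E3 :: "nat \<Rightarrow> (int \<Rightarrow> 'k::comm_ring_1 Aelem set) \<Rightarrow> bool" where
  "E3 p F \<longleftrightarrow> (\<forall>i. \<forall>f \<in> F i. Acoprod p f \<in> TA_p p \<and>
      (\<forall>m \<in> supp (Acoprod p f). mono_sum (Aweight p) (tright m) \<le> i))"

text \<open>sum_j F_{j+i} A_{k-j} (x) A_j = span of the tensor monomials a (x) b with, for some j,
weight a <= j+i, deg a = k-j, deg b = j.\<close>
definition E4 :: "nat \<Rightarrow> (int \<Rightarrow> 'k::comm_ring_1 Aelem set) \<Rightarrow> bool" where
  "E4 p F \<longleftrightarrow> (\<forall>i k. \<forall>f \<in> F i. homog (Adeg p) k f \<longrightarrow>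
      Acoprod p f \<in> TA_p p \<and>
      (\<forall>m \<in> supp (Acoprod p f). \<exists>j::int.
          mono_sum (Aweight p) (tleft m) \<le> j + i \<and>
          mono_sum (Adeg p) (tleft m) = k - j \<and>
          mono_sum (Adeg p) (tright m) = j))"

definition E5 :: "nat \<Rightarrow> (int \<Rightarrow> 'k::comm_ring_1 Aelem set) \<Rightarrow> bool" where
  "E5 p F \<longleftrightarrow> (\<forall>j k. \<forall>f \<in> F j. \<forall>g \<in> F k. Amult p f g \<in> F (j + k))"

text \<open>E^k_n = (F_n A)_k / (F_{n-1} A)_k vanishes, i.e. (F_n A)_k is contained in F_{n-1} A.\<close>
definition E6 :: "nat \<Rightarrow> (int \<Rightarrow> 'k::comm_ring_1 Aelem set) \<Rightarrow> bool" where
  "E6 p F \<longleftrightarrow> (\<forall>i k::int. \<forall>\<epsilon> \<in> {0, 1::int}.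
      (k < 2 * i * (int p - 1) + \<epsilon> \<or> (2 * i + \<epsilon> + k) mod (2 * int p) \<notin> {0, 2}) \<longrightarrow>
      (\<forall>f \<in> F (2 * i + \<epsilon>). homog (Adeg p) k f \<longrightarrow> f \<in> F (2 * i + \<epsilon> - 1)))"

text \<open>Variables: (True, n) is tau_n (n >= 0, only for p odd); (False, n) is xi_n (p odd)
resp. zeta_n (p = 2), n >= 1.\<close>

type_synonym 'k Selem = "(bool \<times> nat, 'k) salg"

definition Svar :: "nat \<Rightarrow> bool \<times> nat \<Rightarrow> bool" where
  "Svar p v \<longleftrightarrow> (if fst v then odd p else 1 \<le> snd v)"

definition Sodd :: "nat \<Rightarrow> bool \<times> nat \<Rightarrow> bool" where
  "Sodd p v \<longleftrightarrow> fst v \<and> odd p"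

definition Sweight :: "nat \<Rightarrow> bool \<times> nat \<Rightarrow> int" where
  "Sweight p v = (if fst v then 1 else if odd p then 2 else 1)"

definition S_p :: "nat \<Rightarrow> 'k::comm_ring_1 Selem set" where
  "S_p p = salg_carrier (Svar p) (Sodd p)"

text \<open>F_i of the dual Steenrod algebra (dual of the excess filtration).\<close>
definition Fil_S :: "nat \<Rightarrow> int \<Rightarrow> 'k::comm_ring_1 Selem set" where
  "Fil_S p i = {f \<in> S_p p. \<forall>m \<in> supp f. mono_sum (Sweight p) m \<le> i}"

definition rho_gen :: "nat \<Rightarrow> nat \<times> nat \<Rightarrow> 'k::comm_ring_1 Selem" where
  "rho_gen p v = (case v of (i, j) \<Rightarrow>
     if odd p then
       (if j = 1 then (\<lambda>m. - svar (True, i - 2) m)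
        else spow (Sodd p) (svar (False, i - j)) (p ^ (j - 2)))
     else spow (Sodd p) (svar (False, i - j)) (2 ^ (j - 1)))"

definition rho :: "nat \<Rightarrow> 'k::comm_ring_1 Aelem \<Rightarrow> 'k Selem" where
  "rho p = sext (Sodd p) (rho_gen p)"

end

theory Submission
  imports Defs
begin


definition mon :: "'m \<Rightarrow> 'k::zero \<Rightarrow> 'm \<Rightarrow> 'k" where
  "mon a c = (\<lambda>m. if m = a then c else 0)"

definition dl :: "'v \<Rightarrow> nat \<Rightarrow> 'v \<Rightarrow> nat" where
  "dl v n = (\<lambda>u. if u = v then n else 0)"

lemma supp_mon: "supp (mon a c) = (if c = 0 then {} else {a})"
  by (auto simp: supp_def mon_def)

lemma svar_mon: "svar v = mon (dl v 1) 1" unfolding svar_def mon_def dl_def by (simp add: One_nat_def)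
lemma sone_mon: "sone = mon (\<lambda>_. 0) 1" by (simp add: sone_def mon_def)

lemma supp_empty_iff: "supp f = {} \<longleftrightarrow> f = (\<lambda>_. 0)"
  by (auto simp: supp_def)

lemma supp_smult:
  fixes f g :: "('v::linorder, 'k::comm_ring_1) salg"
  shows "supp (smult od f g) \<subseteq> {(\<lambda>v. a v + b v) | a b. a \<in> supp f \<and> b \<in> supp g \<and> \<not>(\<exists>v. od v \<and> a v \<noteq> 0 \<and> b v \<noteq> 0)}"
proof
  fix m assume "m \<in> supp (smult od f g)"
  then have "(\<Sum>(a, b) \<in> {(a, b). a \<in> supp f \<and> b \<in> supp g \<and> (\<lambda>v. a v + b v) = m}. sgn_coeff od a b * f a * g b) \<noteq> 0"
    by (simp add: supp_def smult_def)
  then obtain ab where ab0: "ab \<in> {(a, b). a \<in> supp f \<and> b \<in> supp g \<and> (\<lambda>v. a v + b v) = m}"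
     "(\<lambda>(a, b). sgn_coeff od a b * f a * g b) ab \<noteq> 0"
    by (rule sum.not_neutral_contains_not_neutral)
  obtain a b where "ab = (a, b)" by (cases ab)
  with ab0 have ab: "a \<in> supp f" "b \<in> supp g" "(\<lambda>v. a v + b v) = m" "sgn_coeff od a b * f a * g b \<noteq> 0"
    by auto
  then have "sgn_coeff od a b \<noteq> (0::'k)" by auto
  then have "\<not>(\<exists>v. od v \<and> a v \<noteq> 0 \<and> b v \<noteq> 0)" by (auto simp: sgn_coeff_def split: if_splits)
  then show "m \<in> {(\<lambda>v. a v + b v) | a b. a \<in> supp f \<and> b \<in> supp g \<and> \<not>(\<exists>v. od v \<and> a v \<noteq> 0 \<and> b v \<noteq> 0)}"
    using ab by blast
qed

lemma finite_supp_smult: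
  assumes "finite (supp f)" "finite (supp g)"
  shows "finite (supp (smult od f g))"
proof -
  have "supp (smult od f g) \<subseteq> (\<lambda>(a, b). (\<lambda>v. a v + b v)) ` (supp f \<times> supp g)"
    using supp_smult[of od f g] by fastforce
  then show ?thesis using assms finite_subset by blast
qed

lemma spow_0: "spow od f 0 = sone" by (simp add: spow_def)
lemma spow_Suc: "spow od f (Suc n) = smult od f (spow od f n)" by (simp add: spow_def)

lemma finite_supp_sone: "finite (supp sone)" by (simp add: sone_mon supp_mon)

lemma finite_supp_spow: "finite (supp f) \<Longrightarrow> finite (supp (spow od f n))"
  by (induction n) (auto simp: spow_0 spow_Suc finite_supp_sone finite_supp_smult)

lemma finite_supp_foldr:
  "(\<And>v. v \<in> set L \<Longrightarrow> finite (supp (h v))) \<Longrightarrow>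
   finite (supp (foldr (\<lambda>v acc. smult od (spow od (h v) (x v)) acc) L sone))"
  by (induction L) (auto simp: finite_supp_sone finite_supp_smult finite_supp_spow)

lemma finite_supp_smono_img:
  "finite (vars x) \<Longrightarrow> (\<And>v. v \<in> vars x \<Longrightarrow> finite (supp (h v))) \<Longrightarrow> finite (supp (smono_img od h x))"
  unfolding smono_img_def by (rule finite_supp_foldr) auto

lemma smult_mon: "smult od (mon a c) (mon b d) = mon (\<lambda>v. a v + b v) (sgn_coeff od a b * c * d)"
proof (cases "c = 0 \<or> d = 0")
  case True
  then show ?thesis by (auto simp: smult_def supp_mon mon_def fun_eq_iff)
next
  case False
  show ?thesis
  proof (rule ext)
    fix m
    have "{(a', b'). a' \<in> supp (mon a c) \<and> b' \<in> supp (mon b d) \<and> (\<lambda>v. a' v + b' v) = m} = (if m = (\<lambda>v. a v + b v) then {(a,b)} else {})"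
      using False by (auto simp: supp_mon)
    then show "smult od (mon a c) (mon b d) m = mon (\<lambda>v. a v + b v) (sgn_coeff od a b * c * d) m"
      by (simp add: smult_def mon_def)
  qed
qed

lemma supp_smultE:
  fixes f g :: "('v::linorder, 'k::comm_ring_1) salg"
  assumes "m \<in> supp (smult od f g)"
  obtains a b where "a \<in> supp f" "b \<in> supp g" "m = (\<lambda>v. a v + b v)" "\<not>(\<exists>v. od v \<and> a v \<noteq> 0 \<and> b v \<noteq> 0)"
proof -
  from assms supp_smult[of od f g] have "m \<in> {(\<lambda>v. a v + b v) | a b. a \<in> supp f \<and> b \<in> supp g \<and> \<not>(\<exists>v. od v \<and> a v \<noteq> 0 \<and> b v \<noteq> 0)}"
    by (rule subsetD[rotated])
  then show ?thesis using that by blast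
qed

lemma supp_spow_R:
  fixes f :: "('v::linorder, 'k::comm_ring_1) salg"
  assumes R0: "R (\<lambda>_. 0) (\<lambda>_. 0)"
    and Radd: "\<And>x y a b. R x a \<Longrightarrow> R y b \<Longrightarrow> \<not>(\<exists>v. od v \<and> a v \<noteq> 0 \<and> b v \<noteq> 0) \<Longrightarrow> R (\<lambda>v. x v + y v) (\<lambda>v. a v + b v)"
    and Rg: "\<And>a. a \<in> supp f \<Longrightarrow> R (dl u 1) a"
  shows "supp (spow od f n) \<subseteq> {a. R (dl u n) a}"
proof (induction n)
  case 0
  have "dl u 0 = (\<lambda>_. 0)" by (auto simp: dl_def)
  then show ?case using R0 by (auto simp: spow_0 sone_mon supp_mon)
next
  case (Suc n)
  have e: "(\<lambda>v. dl u 1 v + dl u n v) = dl u (Suc n)" by (auto simp: dl_def)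
  show ?case
  proof
    fix m assume "m \<in> supp (spow od f (Suc n))"
    then have "m \<in> supp (smult od f (spow od f n))" by (simp add: spow_Suc)
    then obtain a b where ab: "a \<in> supp f" "b \<in> supp (spow od f n)" "m = (\<lambda>v. a v + b v)"
      "\<not>(\<exists>v. od v \<and> a v \<noteq> 0 \<and> b v \<noteq> 0)"
      by (rule supp_smultE)
    have ra: "R (dl u 1) a" using Rg ab(1) .
    have rb: "R (dl u n) b" using Suc ab(2) by blast
    have "R (\<lambda>v. dl u 1 v + dl u n v) (\<lambda>v. a v + b v)" by (rule Radd[OF ra rb ab(4)])
    then show "m \<in> {a. R (dl u (Suc n)) a}" using e ab(3) by simp
  qed
qed

lemma supp_foldr_R:
  fixes h :: "'v::linorder \<Rightarrow> ('w::linorder, 'k::comm_ring_1) salg"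
  assumes R0: "R (\<lambda>_. 0) (\<lambda>_. 0)"
    and Radd: "\<And>x y a b. R x a \<Longrightarrow> R y b \<Longrightarrow> \<not>(\<exists>v. od v \<and> a v \<noteq> 0 \<and> b v \<noteq> 0) \<Longrightarrow> R (\<lambda>v. x v + y v) (\<lambda>v. a v + b v)"
    and Rg: "\<And>v a. v \<in> set L \<Longrightarrow> a \<in> supp (h v) \<Longrightarrow> R (dl v 1) a"
    and dist: "distinct L"
  shows "supp (foldr (\<lambda>v acc. smult od (spow od (h v) (x v)) acc) L sone) \<subseteq> {a. R (\<lambda>u. if u \<in> set L then x u else 0) a}"
  using Rg dist
proof (induction L)
  case Nil
  then show ?case using R0 by (auto simp: sone_mon supp_mon)
next
  case (Cons v L)
  have e: "(\<lambda>u. dl v (x v) u + (if u \<in> set L then x u else 0)) = (\<lambda>u. if u \<in> set (v # L) then x u else 0)"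
    using Cons.prems(2) by (auto simp: dl_def)
  have sp: "supp (spow od (h v) (x v)) \<subseteq> {a. R (dl v (x v)) a}"
    by (rule supp_spow_R[where R=R and od=od, OF R0 Radd]) (use Cons.prems in auto)
  have IH: "supp (foldr (\<lambda>v acc. smult od (spow od (h v) (x v)) acc) L sone) \<subseteq> {a. R (\<lambda>u. if u \<in> set L then x u else 0) a}"
    using Cons by auto
  show ?case
  proof
    fix m assume "m \<in> supp (foldr (\<lambda>v acc. smult od (spow od (h v) (x v)) acc) (v # L) sone)"
    then have "m \<in> supp (smult od (spow od (h v) (x v)) (foldr (\<lambda>v acc. smult od (spow od (h v) (x v)) acc) L sone))"
      by simp
    then obtain a b where ab: "a \<in> supp (spow od (h v) (x v))" "b \<in> supp (foldr (\<lambda>v acc. smult od (spow od (h v) (x v)) acc) L sone)" "m = (\<lambda>u. a u + b u)"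
      "\<not>(\<exists>u. od u \<and> a u \<noteq> 0 \<and> b u \<noteq> 0)"
      by (rule supp_smultE)
    have ra: "R (dl v (x v)) a" using sp ab(1) by blast
    have rb: "R (\<lambda>u. if u \<in> set L then x u else 0) b" using IH ab(2) by blast
    have "R (\<lambda>u. dl v (x v) u + (if u \<in> set L then x u else 0)) (\<lambda>u. a u + b u)"
      by (rule Radd[OF ra rb ab(4)])
    then show "m \<in> {a. R (\<lambda>u. if u \<in> set (v # L) then x u else 0) a}" using e ab(3) by simp
  qed
qed

lemma supp_smono_img_R:
  fixes h :: "'v::linorder \<Rightarrow> ('w::linorder, 'k::comm_ring_1) salg"
  assumes R0: "R (\<lambda>_. 0) (\<lambda>_. 0)"
    and Radd: "\<And>x y a b. R x a \<Longrightarrow> R y b \<Longrightarrow> \<not>(\<exists>v. od v \<and> a v \<noteq> 0 \<and> b v \<noteq> 0) \<Longrightarrow> R (\<lambda>v. x v + y v) (\<lambda>v. a v + b v)"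
    and Rg: "\<And>v a. v \<in> vars x \<Longrightarrow> a \<in> supp (h v) \<Longrightarrow> R (dl v 1) a"
    and fin: "finite (vars x)"
  shows "supp (smono_img od h x) \<subseteq> {a. R x a}"
proof -
  have e: "(\<lambda>u. if u \<in> set (sorted_list_of_set (vars x)) then x u else 0) = x"
    using fin by (auto simp: vars_def)
  have "supp (smono_img od h x) \<subseteq> {a. R (\<lambda>u. if u \<in> set (sorted_list_of_set (vars x)) then x u else 0) a}"
    unfolding smono_img_def
    by (rule supp_foldr_R[where R=R and od=od, OF R0 Radd]) (use fin Rg in auto)
  then show ?thesis using e by simp
qed

lemma sgn_coeff_one:
  assumes "\<And>u. od u \<Longrightarrow> a u = 0 \<or> (\<forall>v. od v \<longrightarrow> b v = 0)"
  shows "sgn_coeff od a b = 1"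
proof -
  have "{(u, v). od u \<and> od v \<and> a u \<noteq> 0 \<and> b v \<noteq> 0 \<and> v < u} = {}"
  proof (rule equals0I)
    fix z assume "z \<in> {(u, v). od u \<and> od v \<and> a u \<noteq> 0 \<and> b v \<noteq> 0 \<and> v < u}"
    then obtain u v where "od u" "od v" "a u \<noteq> 0" "b v \<noteq> 0" by auto
    then show False using assms[of u] by auto
  qed
  moreover have "\<not>(\<exists>v. od v \<and> a v \<noteq> 0 \<and> b v \<noteq> 0)"
  proof
    assume "\<exists>v. od v \<and> a v \<noteq> 0 \<and> b v \<noteq> 0"
    then obtain v where "od v" "a v \<noteq> 0" "b v \<noteq> 0" by auto
    then show False using assms[of v] by auto
  qed
  ultimately show ?thesis unfolding sgn_coeff_def by (simp only: if_False card.empty power_0)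
qed

lemma sgn_coeff_nz:
  assumes "\<not>(\<exists>v. od v \<and> a v \<noteq> 0 \<and> b v \<noteq> 0)"
  shows "sgn_coeff od a b \<noteq> (0::'k::idom)"
  using assms by (simp add: sgn_coeff_def)

lemma spow_mon_dl:
  fixes c :: "'k::comm_ring_1"
  assumes "\<not> od u \<or> n \<le> 1"
  shows "spow od (mon (dl u 1) c) n = mon (dl u n) (c ^ n)"
  using assms
proof (induction n)
  case 0
  have "dl u 0 = (\<lambda>_. 0)" by (auto simp: dl_def)
  then show ?case by (simp add: spow_0 sone_mon)
next
  case (Suc n)
  have s: "sgn_coeff od (dl u (Suc 0)) (dl u n) = (1::'k)"
    by (rule sgn_coeff_one) (use Suc.prems in \<open>auto simp: dl_def\<close>)
  have e: "(\<lambda>v. dl u (Suc 0) v + dl u n v) = dl u (Suc n)" by (auto simp: dl_def)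
  show ?case using Suc by (simp add: spow_Suc smult_mon s e)
qed

lemma smono_img_exact_list:
  fixes h :: "'v::linorder \<Rightarrow> ('w::linorder, 'k::field) salg"
  assumes hv: "\<And>v. v \<in> set L \<Longrightarrow> h v = mon (dl (g v) 1) (c v)"
    and cnz: "\<And>v. v \<in> set L \<Longrightarrow> c v \<noteq> 0"
    and inj: "inj_on g (set L)"
    and odd1: "\<And>v. v \<in> set L \<Longrightarrow> od (g v) \<Longrightarrow> x v \<le> 1"
    and dist: "distinct L"
  shows "\<exists>c' M. c' \<noteq> 0 \<and> foldr (\<lambda>v acc. smult od (spow od (h v) (x v)) acc) L sone = mon M c'
     \<and> (\<forall>v\<in>set L. M (g v) = x v) \<and> (\<forall>u. u \<notin> g ` set L \<longrightarrow> M u = 0)"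
  using assms
proof (induction L)
  case Nil
  show ?case by (rule exI[of _ "1::'k"], rule exI[of _ "\<lambda>_. 0"]) (simp add: sone_mon)
next
  case (Cons v L)
  have injL: "inj_on g (set L)" using Cons.prems(3) by (simp add: inj_on_insert)
  have vL: "v \<notin> set L" using Cons.prems(5) by simp
  have "\<exists>c' M. c' \<noteq> 0 \<and> foldr (\<lambda>v acc. smult od (spow od (h v) (x v)) acc) L sone = mon M c'
     \<and> (\<forall>v\<in>set L. M (g v) = x v) \<and> (\<forall>u. u \<notin> g ` set L \<longrightarrow> M u = 0)"
    by (rule Cons.IH) (use Cons.prems injL in auto)
  then obtain c' M where cM: "c' \<noteq> 0" "foldr (\<lambda>v acc. smult od (spow od (h v) (x v)) acc) L sone = mon M c'"
     "\<forall>v\<in>set L. M (g v) = x v" "\<forall>u. u \<notin> g ` set L \<longrightarrow> M u = 0" by blast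
  have gv: "g v \<notin> g ` set L"
  proof
    assume "g v \<in> g ` set L"
    then obtain w where w: "w \<in> set L" "g v = g w" by blast
    then have "v = w" using Cons.prems(3) by (auto dest: inj_onD)
    then show False using w vL by simp
  qed
  have hv': "h v = mon (dl (g v) 1) (c v)" using Cons.prems(1) by simp
  have "\<not> od (g v) \<or> x v \<le> 1" using Cons.prems(4) by auto
  then have sp: "spow od (h v) (x v) = mon (dl (g v) (x v)) (c v ^ x v)"
    unfolding hv' by (rule spow_mon_dl)
  have M0: "M (g v) = 0" using cM(4) gv by blast
  have nsh: "\<not>(\<exists>u. od u \<and> dl (g v) (x v) u \<noteq> 0 \<and> M u \<noteq> 0)"
  proof
    assume "\<exists>u. od u \<and> dl (g v) (x v) u \<noteq> 0 \<and> M u \<noteq> 0"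
    then obtain u where u: "dl (g v) (x v) u \<noteq> 0" "M u \<noteq> 0" by blast
    from u(1) have "u = g v" by (simp add: dl_def split: if_splits)
    then show False using u(2) M0 by simp
  qed
  have snz: "sgn_coeff od (dl (g v) (x v)) M \<noteq> (0::'k)" by (rule sgn_coeff_nz[OF nsh])
  have cv: "c v \<noteq> 0" using Cons.prems(2) by simp
  let ?M = "\<lambda>u. dl (g v) (x v) u + M u"
  have "foldr (\<lambda>v acc. smult od (spow od (h v) (x v)) acc) (v # L) sone
        = smult od (spow od (h v) (x v)) (foldr (\<lambda>v acc. smult od (spow od (h v) (x v)) acc) L sone)"
    by simp
  also have "\<dots> = mon ?M (sgn_coeff od (dl (g v) (x v)) M * c v ^ x v * c')"
    unfolding cM(2) sp by (rule smult_mon)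
  finally have F: "foldr (\<lambda>v acc. smult od (spow od (h v) (x v)) acc) (v # L) sone
        = mon ?M (sgn_coeff od (dl (g v) (x v)) M * c v ^ x v * c')" .
  have NZ: "sgn_coeff od (dl (g v) (x v)) M * c v ^ x v * c' \<noteq> 0"
    using snz cM(1) cv by simp
  have A: "\<forall>w\<in>set (v # L). ?M (g w) = x w"
  proof
    fix w assume w: "w \<in> set (v # L)"
    show "?M (g w) = x w"
    proof (cases "w = v")
      case True then show ?thesis using M0 by (simp add: dl_def)
    next
      case False
      have "g w \<noteq> g v" by (rule inj_on_contraD[OF Cons.prems(3) False w]) simp
      moreover have "w \<in> set L" using False w by simp
      ultimately show ?thesis using cM(3) by (simp add: dl_def)
    qed
  qed
  have B: "\<forall>u. u \<notin> g ` set (v # L) \<longrightarrow> ?M u = 0" using cM(4) by (simp add: dl_def)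
  show ?case using F NZ A B by blast
qed

lemma smono_img_exact:
  fixes h :: "'v::linorder \<Rightarrow> ('w::linorder, 'k::field) salg"
  assumes fin: "finite (vars x)"
    and hv: "\<And>v. v \<in> vars x \<Longrightarrow> h v = mon (dl (g v) 1) (c v)"
    and cnz: "\<And>v. v \<in> vars x \<Longrightarrow> c v \<noteq> 0"
    and inj: "inj_on g (vars x)"
    and odd1: "\<And>v. v \<in> vars x \<Longrightarrow> od (g v) \<Longrightarrow> x v \<le> 1"
  shows "\<exists>c' M. c' \<noteq> 0 \<and> smono_img od h x = mon M c'
     \<and> (\<forall>v\<in>vars x. M (g v) = x v) \<and> (\<forall>u. u \<notin> g ` vars x \<longrightarrow> M u = 0)"
  using smono_img_exact_list[where L="sorted_list_of_set (vars x)" and h=h and g=g and c=c and x=x and od=od] assms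
  unfolding smono_img_def by (auto simp: vars_def)

definition mono_sumS :: "'v set \<Rightarrow> ('v \<Rightarrow> int) \<Rightarrow> ('v \<Rightarrow> nat) \<Rightarrow> int" where
  "mono_sumS S w m = (\<Sum>v\<in>S. int (m v) * w v)"

lemma mono_sum_superset:
  assumes "finite S" "vars m \<subseteq> S"
  shows "mono_sum w m = (\<Sum>v\<in>S. int (m v) * w v)"
  unfolding mono_sum_def
  by (rule sum.mono_neutral_left) (use assms in \<open>auto simp: vars_def\<close>)

lemma vars_add: "vars (\<lambda>v. a v + b v) = vars a \<union> vars b"
  by (auto simp: vars_def)

lemma mono_sum_add:
  assumes "finite (vars a)" "finite (vars b)"
  shows "mono_sum w (\<lambda>v. a v + b v) = mono_sum w a + mono_sum w b"
proof -
  let ?S = "vars a \<union> vars b"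
  have "mono_sum w (\<lambda>v. a v + b v) = (\<Sum>v\<in>?S. int (a v + b v) * w v)"
    by (rule mono_sum_superset) (use assms in \<open>auto simp: vars_add\<close>)
  also have "\<dots> = (\<Sum>v\<in>?S. int (a v) * w v) + (\<Sum>v\<in>?S. int (b v) * w v)"
    by (simp add: sum.distrib algebra_simps)
  also have "\<dots> = mono_sum w a + mono_sum w b"
    using mono_sum_superset[of ?S a w] mono_sum_superset[of ?S b w] assms by auto
  finally show ?thesis .
qed

lemma mono_sum_zero: "mono_sum w (\<lambda>_. 0) = 0" by (simp add: mono_sum_def vars_def)

lemma vars_dl: "vars (dl v n) = (if n = 0 then {} else {v})" by (auto simp: vars_def dl_def)

lemma mono_sum_dl: "mono_sum w (dl v n) = int n * w v"
  unfolding mono_sum_def vars_dl by (simp add: dl_def)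

lemma mono_sum_lin:
  "mono_sum (\<lambda>v. a * w1 v + b * w2 v) m = a * mono_sum w1 m + b * mono_sum w2 m"
  by (simp add: mono_sum_def sum.distrib sum_distrib_left algebra_simps)

lemma mono_sum_mono:
  "(\<And>v. v \<in> vars m \<Longrightarrow> w1 v \<le> w2 v) \<Longrightarrow> mono_sum w1 m \<le> mono_sum w2 m"
  unfolding mono_sum_def by (rule sum_mono) (simp add: mult_left_mono)

lemma mono_sum_cong:
  "(\<And>v. v \<in> vars m \<Longrightarrow> w1 v = w2 v) \<Longrightarrow> mono_sum w1 m = mono_sum w2 m"
  unfolding mono_sum_def by (rule sum.cong) auto

lemma mono_sum_nonneg:
  "(\<And>v. v \<in> vars m \<Longrightarrow> 0 \<le> w v) \<Longrightarrow> 0 \<le> mono_sum w m"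
  unfolding mono_sum_def by (rule sum_nonneg) simp


lemma pow_split: "j \<le> i \<Longrightarrow> (P::int) ^ j * P ^ (i - j) = P ^ i"
  by (simp add: power_add[symmetric])

lemma pow_split2: "c \<le> j \<Longrightarrow> j \<le> i \<Longrightarrow> (P::int) ^ (j - c) * P ^ (i - j) = P ^ (i - c)"
proof -
  assume a: "c \<le> j" "j \<le> i"
  then have "i - c = (j - c) + (i - j)" by simp
  then show ?thesis by (simp add: power_add)
qed

lemma odd_wd:
  assumes "odd p" "1 \<le> j" "j < i"
  shows "Aweight p (i, j) + Adeg p (i, j) = 2 * int p ^ (i - 2)"
proof (cases "j = 1")
  case True then show ?thesis using assms by (simp add: Aweight_def Adeg_def)
next
  case False
  then have "2 \<le> j" using assms by auto
  have "int p ^ (j - 2) * int p ^ (i - j) = int p ^ (i - 2)"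
    using pow_split2[of 2 j i "int p"] \<open>2 \<le> j\<close> assms by simp
  then show ?thesis using assms False by (simp add: Aweight_def Adeg_def algebra_simps)
qed

lemma even_wd:
  assumes "even p" "1 \<le> j" "j < i"
  shows "Aweight p (i, j) + Adeg p (i, j) = 2 ^ (i - 1)"
proof -
  have "(2::int) ^ (j - 1) * 2 ^ (i - j) = 2 ^ (i - 1)"
    using pow_split2[of 1 j i 2] assms by simp
  then show ?thesis using assms by (simp add: Aweight_def Adeg_def algebra_simps)
qed

lemma p_pow_shift: "3 \<le> i \<Longrightarrow> (P::int) ^ (i - 2) = P * P ^ (i - 3)"
proof -
  assume "3 \<le> i"
  then have "i - 2 = Suc (i - 3)" by simp
  then show ?thesis by (simp only: power_Suc)
qed

lemma pow_ge_base: "1 \<le> n \<Longrightarrow> 1 \<le> (P::int) \<Longrightarrow> P \<le> P ^ n"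
  using power_increasing[of 1 n P] by simp

lemma odd_low:
  assumes "odd p" "2 \<le> p" "1 \<le> j" "j < i"
  shows "(int p - 1) * Aweight p (i, j) - (int p - 2) * (if (i, j) = (2, 1) then 1 else 0)
          + int p * (if j = 1 \<and> (i, j) \<noteq> (2, 1) then 1 else 0) \<le> Adeg p (i, j)"
proof (cases "j = 1")
  case True
  show ?thesis
  proof (cases "i = 2")
    case True then show ?thesis using \<open>j = 1\<close> assms by (simp add: Aweight_def Adeg_def)
  next
    case False
    then have "3 \<le> i" using assms \<open>j = 1\<close> by auto
    have "int p \<le> int p ^ (i - 2)" using assms \<open>3 \<le> i\<close> by (intro pow_ge_base) auto
    then have g: "(int p - 1) * 1 - 0 + int p * 1 \<le> 2 * int p ^ (i - 2) - 1" by (simp add: algebra_simps)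
    show ?thesis using True False assms g by (simp add: Aweight_def Adeg_def)
  qed
next
  case False
  then have j2: "2 \<le> j" using assms by auto
  have "int p \<le> int p ^ (i - j)" using assms by (intro pow_ge_base) auto
  then have "int p - 1 \<le> int p ^ (i - j) - 1" by (rule diff_right_mono)
  then have "2 * int p ^ (j - 2) * (int p - 1) \<le> 2 * int p ^ (j - 2) * (int p ^ (i - j) - 1)"
    by (rule mult_left_mono) simp
  then show ?thesis using False assms by (simp add: Aweight_def Adeg_def algebra_simps)
qed

lemma odd_mod:
  assumes "odd p" "1 \<le> j" "j < i"
  shows "Aweight p (i, j) + Adeg p (i, j) = 2 * (if (i, j) = (2, 1) then 1 else 0)
          + 2 * int p * (if (i, j) = (2, 1) then 0 else int p ^ (i - 3))"
proof (cases "(i, j) = (2, 1)")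
  case True then show ?thesis using odd_wd[OF assms] by simp
next
  case False
  then have "3 \<le> i" using assms by auto
  then show ?thesis using odd_wd[OF assms] False p_pow_shift[OF \<open>3 \<le> i\<close>, of "int p"] by simp
qed

lemma even_mod:
  assumes "even p" "1 \<le> j" "j < i"
  shows "Aweight p (i, j) + Adeg p (i, j) = 2 * (if (i, j) = (2, 1) then 1 else 0)
          + 4 * (if (i, j) = (2, 1) then 0 else 2 ^ (i - 3))"
proof (cases "(i, j) = (2, 1)")
  case True then show ?thesis using even_wd[OF assms] by simp
next
  case False
  then have "3 \<le> i" using assms by auto
  then have "i - 1 = Suc (Suc (i - 3))" by simp
  then have "(2::int) ^ (i - 1) = 4 * 2 ^ (i - 3)" by (simp add: power_Suc)
  then show ?thesis using even_wd[OF assms] False by simp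
qed

lemma even_low:
  assumes "even p" "1 \<le> j" "j < i"
  shows "Aweight p (i, j) \<le> Adeg p (i, j)"
proof -
  have "(2::int) \<le> 2 ^ (i - j)" using assms by (intro pow_ge_base) auto
  then have "(2::int) ^ (j - 1) * 1 \<le> 2 ^ (j - 1) * (2 ^ (i - j) - 1)" by (intro mult_left_mono) auto
  then show ?thesis using assms by (simp add: Aweight_def Adeg_def)
qed

lemma Aweight_nonneg: "0 \<le> Aweight p v"
  by (auto simp: Aweight_def split: prod.splits)


lemma mono_sum_ind:
  assumes "finite (vars x)"
  shows "mono_sum (\<lambda>v. if v = v0 then 1 else 0) x = int (x v0)"
proof -
  have "mono_sum (\<lambda>v. if v = v0 then 1 else 0) x = (\<Sum>v\<in>vars x. if v = v0 then int (x v) else 0)"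
    unfolding mono_sum_def by (rule sum.cong) auto
  also have "\<dots> = int (x v0)" using assms by (simp add: vars_def)
  finally show ?thesis .
qed

lemma A_p_iff: "f \<in> A_p p \<longleftrightarrow> finite (supp f) \<and> (\<forall>m\<in>supp f. valid_mono Avar (Aodd p) m)"
  by (simp add: A_p_def salg_carrier_def)

lemma zero_in_Fil: "(\<lambda>_. 0) \<in> Fil_A p i"
  by (simp add: Fil_A_def A_p_iff supp_def)

lemma E1_Fil: "E1 p (Fil_A p :: int \<Rightarrow> 'k::comm_ring_1 Aelem set)"
  unfolding E1_def
proof (intro allI impI)
  fix i :: int assume i: "i < 0"
  show "(Fil_A p i :: 'k Aelem set) = {(\<lambda>_. 0)}"
  proof
    show "(Fil_A p i :: 'k Aelem set) \<subseteq> {(\<lambda>_. 0)}"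
    proof
      fix f :: "'k Aelem" assume f: "f \<in> Fil_A p i"
      have "supp f = {}"
      proof (rule ccontr)
        assume "supp f \<noteq> {}"
        then obtain m where "m \<in> supp f" by auto
        then have "mono_sum (Aweight p) m \<le> i" using f by (simp add: Fil_A_def)
        moreover have "0 \<le> mono_sum (Aweight p) m" by (rule mono_sum_nonneg) (simp add: Aweight_nonneg)
        ultimately show False using i by simp
      qed
      then show "f \<in> {(\<lambda>_. 0)}" by (simp add: supp_empty_iff)
    qed
  qed (simp add: zero_in_Fil)
qed

lemma E2_Fil: "E2 p (Fil_A p :: int \<Rightarrow> 'k::comm_ring_1 Aelem set)"
  unfolding E2_def
proof
  show "(\<Union>i. Fil_A p i :: 'k Aelem set) \<subseteq> A_p p" by (auto simp: Fil_A_def)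
  show "A_p p \<subseteq> (\<Union>i. Fil_A p i :: 'k Aelem set)"
  proof
    fix f :: "'k Aelem" assume f: "f \<in> A_p p"
    let ?i = "\<Sum>m\<in>supp f. mono_sum (Aweight p) m"
    have "\<forall>m\<in>supp f. mono_sum (Aweight p) m \<le> ?i"
      using f by (intro ballI member_le_sum) (auto simp: A_p_iff intro: mono_sum_nonneg Aweight_nonneg)
    then have "f \<in> Fil_A p ?i" using f by (simp add: Fil_A_def)
    then show "f \<in> (\<Union>i. Fil_A p i)" by blast
  qed
qed

lemma valid_add:
  assumes "valid_mono V od a" "valid_mono V od b" "\<not>(\<exists>v. od v \<and> a v \<noteq> 0 \<and> b v \<noteq> 0)"
  shows "valid_mono V od (\<lambda>v. a v + b v)"
  using assms unfolding valid_mono_def vars_add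
  by (metis add.right_neutral add_0 le_sup_iff finite_Un)

lemma E5_Fil: "E5 p (Fil_A p :: int \<Rightarrow> 'k::comm_ring_1 Aelem set)"
  unfolding E5_def
proof (intro allI ballI)
  fix j k :: int and f g :: "'k Aelem"
  assume f: "f \<in> Fil_A p j" and g: "g \<in> Fil_A p k"
  have fin: "finite (supp (Amult p f g))"
    using f g by (auto simp: Amult_def Fil_A_def A_p_iff intro: finite_supp_smult)
  have "\<forall>m\<in>supp (Amult p f g). valid_mono Avar (Aodd p) m \<and> mono_sum (Aweight p) m \<le> j + k"
  proof
    fix m assume "m \<in> supp (Amult p f g)"
    then obtain a b where ab: "a \<in> supp f" "b \<in> supp g" "m = (\<lambda>v. a v + b v)"
      "\<not>(\<exists>v. Aodd p v \<and> a v \<noteq> 0 \<and> b v \<noteq> 0)"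
      using supp_smult[of "Aodd p" f g] by (auto simp: Amult_def)
    have va: "valid_mono Avar (Aodd p) a" "mono_sum (Aweight p) a \<le> j"
      using ab f by (auto simp: Fil_A_def A_p_iff)
    have vb: "valid_mono Avar (Aodd p) b" "mono_sum (Aweight p) b \<le> k"
      using ab g by (auto simp: Fil_A_def A_p_iff)
    show "valid_mono Avar (Aodd p) m \<and> mono_sum (Aweight p) m \<le> j + k"
      using valid_add[OF va(1) vb(1) ab(4)] mono_sum_add[of a b "Aweight p"] va vb ab(3)
      by (simp add: valid_mono_def)
  qed
  then show "Amult p f g \<in> Fil_A p (j + k)" using fin by (simp add: Fil_A_def A_p_iff)
qed

lemma key_odd:
  assumes p: "odd p" "2 \<le> p" and x: "valid_mono Avar (Aodd p) x"
  defines "n \<equiv> mono_sum (Aweight p) x" and "k \<equiv> mono_sum (Adeg p) x"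
  shows "(int p - 1) * (n - n mod 2) + n mod 2 \<le> k \<and> (n + k) mod (2 * int p) \<in> {0, 2}"
proof -
  have fin: "finite (vars x)" and av: "\<And>v. v \<in> vars x \<Longrightarrow> Avar v" and o1: "\<And>v. Aodd p v \<Longrightarrow> x v \<le> 1"
    using x by (auto simp: valid_mono_def)
  define a where "a = mono_sum (\<lambda>v. if v = (2, 1) then 1 else 0) x"
  define b where "b = mono_sum (\<lambda>v. if snd v = 1 \<and> v \<noteq> (2, 1) then 1 else 0) x"
  define W where "W = mono_sum (\<lambda>v. if snd v = 1 then 0 else int p ^ (snd v - 2)) x"
  define T where "T = mono_sum (\<lambda>v. if v = (2, 1) then 0 else int p ^ (fst v - 3)) x"
  have a_eq: "a = int (x (2, 1))" unfolding a_def by (rule mono_sum_ind[OF fin])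
  have a01: "a = 0 \<or> a = 1" using o1[of "(2,1)"] p a_eq by (auto simp: Aodd_def)
  have b0: "0 \<le> b" unfolding b_def by (rule mono_sum_nonneg) simp
  have "n = mono_sum (\<lambda>v. 1 * ((if v = (2, 1) then 1 else 0) + (if snd v = 1 \<and> v \<noteq> (2, 1) then 1 else 0))
             + 2 * (if snd v = 1 then 0 else int p ^ (snd v - 2))) x"
    unfolding n_def using p by (intro mono_sum_cong) (auto simp: Aweight_def split: prod.splits)
  also have "\<dots> = a + b + 2 * W"
    unfolding mono_sum_lin a_def b_def W_def by (simp add: mono_sum_def sum.distrib algebra_simps)
  finally have nW: "n = a + b + 2 * W" .
  have "(int p - 1) * n - (int p - 2) * a + int p * b
     = mono_sum (\<lambda>v. (int p - 1) * Aweight p v - (int p - 2) * (if v = (2, 1) then 1 else 0)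
          + int p * (if snd v = 1 \<and> v \<noteq> (2, 1) then 1 else 0)) x"
    unfolding n_def a_def b_def mono_sum_def by (simp add: sum.distrib sum_subtractf sum_distrib_left algebra_simps)
  also have "\<dots> \<le> k"
    unfolding k_def
  proof (rule mono_sum_mono)
    fix v assume "v \<in> vars x"
    then obtain i j where v: "v = (i, j)" "1 \<le> j" "j < i" using av by (cases v) (auto simp: Avar_def)
    show "(int p - 1) * Aweight p v - (int p - 2) * (if v = (2, 1) then 1 else 0)
          + int p * (if snd v = 1 \<and> v \<noteq> (2, 1) then 1 else 0) \<le> Adeg p v"
      using odd_low[OF p v(2,3)] v by simp
  qed
  finally have klow: "(int p - 1) * n - (int p - 2) * a + int p * b \<le> k" .
  have "n + k = mono_sum (\<lambda>v. 2 * (if v = (2, 1) then 1 else 0) + 2 * int p * (if v = (2, 1) then 0 else int p ^ (fst v - 3))) x"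
    unfolding n_def k_def mono_sum_def
    apply (subst sum.distrib[symmetric])
    apply (rule sum.cong, simp)
  proof -
    fix v assume "v \<in> vars x"
    then obtain i j where v: "v = (i, j)" "1 \<le> j" "j < i" using av by (cases v) (auto simp: Avar_def)
    show "int (x v) * Aweight p v + int (x v) * Adeg p v =
      int (x v) * (2 * (if v = (2, 1) then 1 else 0) + 2 * int p * (if v = (2, 1) then 0 else int p ^ (fst v - 3)))"
    proof -
      have e: "Aweight p v + Adeg p v = 2 * (if v = (2, 1) then 1 else 0) + 2 * int p * (if v = (2, 1) then 0 else int p ^ (fst v - 3))"
        using odd_mod[OF p(1) v(2,3)] v by simp
      show ?thesis by (simp only: e[symmetric] distrib_left)
    qed
  qed
  also have "\<dots> = 2 * a + 2 * int p * T"
    unfolding a_def T_def mono_sum_def by (simp add: sum.distrib sum_distrib_left algebra_simps)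
  finally have nk: "n + k = 2 * a + 2 * int p * T" .
  have "(n + k) mod (2 * int p) = (2 * a) mod (2 * int p)" unfolding nk by simp
  also have "\<dots> = 2 * a" using a01 p by auto
  finally have m: "(n + k) mod (2 * int p) \<in> {0, 2}" using a01 by auto
  have "(int p - 1) * (n - n mod 2) + n mod 2 \<le> k"
  proof -
    have nm: "n mod 2 = (a + b) mod 2" unfolding nW by simp
    have P: "3 \<le> int p" using p by presburger
    have r: "n mod 2 \<ge> 0" "n mod 2 \<le> 1" by auto
    have rr: "(int p - 1) * (n - n mod 2) + n mod 2 = (int p - 1) * n - (int p - 2) * (n mod 2)"
      by (simp add: algebra_simps)
    have q: "(int p - 2) * (n mod 2) \<ge> 0" using P r by simp
    have pb: "int p * b \<ge> 0" using b0 by simp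
    consider "a = 0" | "a = 1" "b = 0" | "a = 1" "1 \<le> b" using a01 b0 by linarith
    then show ?thesis
    proof cases
      case 1
      then show ?thesis using klow q pb rr by simp
    next
      case 2
      then have "n mod 2 = 1" using nm by simp
      then show ?thesis using klow 2 rr by simp
    next
      case 3
      have "int p * 1 \<le> int p * b" using 3 by (intro mult_left_mono) auto
      moreover have "(int p - 2) * (n mod 2) \<le> int p - 2" using r P by (simp add: mult_left_le)
      moreover have "(int p - 1) * n - (int p - 2) + int p * b \<le> k" using klow 3 by simp
      ultimately show ?thesis using rr q by linarith
    qed
  qed
  then show ?thesis using m by simp
qed

lemma key_even:
  assumes p: "p = 2" and x: "valid_mono Avar (Aodd p) x"
  defines "n \<equiv> mono_sum (Aweight p) x" and "k \<equiv> mono_sum (Adeg p) x"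
  shows "(int p - 1) * (n - n mod 2) + n mod 2 \<le> k \<and> (n + k) mod (2 * int p) \<in> {0, 2}"
proof -
  have fin: "finite (vars x)" and av: "\<And>v. v \<in> vars x \<Longrightarrow> Avar v"
    using x by (auto simp: valid_mono_def)
  define a where "a = mono_sum (\<lambda>v. if v = (2, 1) then 1 else 0) x"
  define T where "T = mono_sum (\<lambda>v. if v = (2, 1) then 0 else (2::int) ^ (fst v - 3)) x"
  have "n \<le> k" unfolding n_def k_def
  proof (rule mono_sum_mono)
    fix v assume "v \<in> vars x"
    then obtain i j where v: "v = (i, j)" "1 \<le> j" "j < i" using av by (cases v) (auto simp: Avar_def)
    show "Aweight p v \<le> Adeg p v" using even_low[of p j i] v p by simp
  qed
  have "n + k = mono_sum (\<lambda>v. 2 * (if v = (2, 1) then 1 else 0) + 4 * (if v = (2, 1) then 0 else 2 ^ (fst v - 3))) x"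
    unfolding n_def k_def mono_sum_def
    apply (subst sum.distrib[symmetric])
    apply (rule sum.cong, simp)
  proof -
    fix v assume "v \<in> vars x"
    then obtain i j where v: "v = (i, j)" "1 \<le> j" "j < i" using av by (cases v) (auto simp: Avar_def)
    show "int (x v) * Aweight p v + int (x v) * Adeg p v =
      int (x v) * (2 * (if v = (2, 1) then 1 else 0) + 4 * (if v = (2, 1) then 0 else 2 ^ (fst v - 3)))"
    proof -
      have e: "Aweight p v + Adeg p v = 2 * (if v = (2, 1) then 1 else 0) + 4 * (if v = (2, 1) then 0 else 2 ^ (fst v - 3))"
        using even_mod[of p j i] v p by simp
      show ?thesis by (simp only: e[symmetric] distrib_left)
    qed
  qed
  also have "\<dots> = 2 * a + 4 * T"
    unfolding a_def T_def mono_sum_def by (simp add: sum.distrib sum_distrib_left algebra_simps)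
  finally have nk: "n + k = 2 * a + 4 * T" .
  have "(n + k) mod 4 = (2 * a) mod 4" unfolding nk by simp
  moreover have "(2 * a) mod 4 = 0 \<or> (2 * a) mod 4 = 2" by presburger
  ultimately have "(n + k) mod (2 * int p) \<in> {0, 2}" using p by simp
  moreover have "(int p - 1) * (n - n mod 2) + n mod 2 = n" using p by simp
  ultimately show ?thesis using \<open>n \<le> k\<close> by simp
qed

lemma key_A:
  assumes "prime p" and x: "valid_mono Avar (Aodd p) x"
  defines "n \<equiv> mono_sum (Aweight p) x" and "k \<equiv> mono_sum (Adeg p) x"
  shows "(int p - 1) * (n - n mod 2) + n mod 2 \<le> k \<and> (n + k) mod (2 * int p) \<in> {0, 2}"
proof (cases "p = 2")
  case True then show ?thesis using key_even x unfolding n_def k_def by blast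
next
  case False
  have "2 \<le> p" using assms prime_ge_2_nat by blast
  then have "2 < p" using False by linarith
  then have "odd p" using assms prime_odd_nat by blast
  note this \<open>2 \<le> p\<close>
  then show ?thesis using key_odd x unfolding n_def k_def by blast
qed

lemma E6_Fil:
  assumes "prime p"
  shows "E6 p (Fil_A p :: int \<Rightarrow> 'k::comm_ring_1 Aelem set)"
  unfolding E6_def
proof (intro allI ballI impI)
  fix i k :: int and e :: int and f :: "'k Aelem"
  assume e: "e \<in> {0, 1}"
    and c: "k < 2 * i * (int p - 1) + e \<or> (2 * i + e + k) mod (2 * int p) \<notin> {0, 2}"
    and f: "f \<in> Fil_A p (2 * i + e)" and h: "homog (Adeg p) k f"
  have "\<forall>m\<in>supp f. mono_sum (Aweight p) m \<le> 2 * i + e - 1"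
  proof
    fix m assume m: "m \<in> supp f"
    then have v: "valid_mono Avar (Aodd p) m" and le: "mono_sum (Aweight p) m \<le> 2 * i + e"
      using f by (auto simp: Fil_A_def A_p_iff)
    have dk: "mono_sum (Adeg p) m = k" using h m by (simp add: homog_def)
    show "mono_sum (Aweight p) m \<le> 2 * i + e - 1"
    proof (rule ccontr)
      assume "\<not> ?thesis"
      then have eq: "mono_sum (Aweight p) m = 2 * i + e" using le by simp
      have "(2 * i + e) mod 2 = e" using e by auto
      then have "2 * i + e - (2 * i + e) mod 2 = 2 * i" by simp
      have K: "(int p - 1) * (2 * i + e - (2 * i + e) mod 2) + (2 * i + e) mod 2 \<le> k \<and> (2 * i + e + k) mod (2 * int p) \<in> {0, 2}"
        using key_A[OF assms v] eq dk by simp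
      have cm: "2 * i * (int p - 1) = (int p - 1) * (2 * i)" by (simp add: mult.commute)
      have em: "(2 * i + e) mod 2 = e" by fact
      have K1: "(int p - 1) * (2 * i) + e \<le> k" using K em by simp
      have K2: "(2 * i + e + k) mod (2 * int p) \<in> {0, 2}" using K by simp
      from c show False
      proof
        assume "k < 2 * i * (int p - 1) + e"
        then show False using K1 cm by linarith
      next
        assume "(2 * i + e + k) mod (2 * int p) \<notin> {0, 2}"
        then show False using K2 by blast
      qed
    qed
  qed
  then show "f \<in> Fil_A p (2 * i + e - 1)" using f by (simp add: Fil_A_def)
qed


lemma tleft_add: "tleft (\<lambda>u. a u + b u) = (\<lambda>v. tleft a v + tleft b v)" by (simp add: tleft_def)
lemma tright_add: "tright (\<lambda>u. a u + b u) = (\<lambda>v. tright a v + tright b v)" by (simp add: tright_def)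
lemma tleft_zero: "tleft (\<lambda>_. 0) = (\<lambda>_. 0)" by (simp add: tleft_def)
lemma tright_zero: "tright (\<lambda>_. 0) = (\<lambda>_. 0)" by (simp add: tright_def)
lemma tleft_F: "tleft (dl (False, w) n) = dl w n" by (auto simp: tleft_def dl_def)
lemma tright_F: "tright (dl (False, w) n) = (\<lambda>_. 0)" by (auto simp: tright_def dl_def)
lemma tleft_T: "tleft (dl (True, w) n) = (\<lambda>_. 0)" by (auto simp: tleft_def dl_def)
lemma tright_T: "tright (dl (True, w) n) = dl w n" by (auto simp: tright_def dl_def)

lemma vars_tleft: "vars (tleft m) \<subseteq> snd ` vars m"
  by (auto simp: vars_def tleft_def image_iff)
lemma vars_tright: "vars (tright m) \<subseteq> snd ` vars m"
  by (auto simp: vars_def tright_def image_iff)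
lemma fin_tleft: "finite (vars m) \<Longrightarrow> finite (vars (tleft m))"
  using vars_tleft finite_subset by blast
lemma fin_tright: "finite (vars m) \<Longrightarrow> finite (vars (tright m))"
  using vars_tright finite_subset by blast

definition RC :: "nat \<Rightarrow> (nat \<times> nat \<Rightarrow> nat) \<Rightarrow> (bool \<times> (nat \<times> nat) \<Rightarrow> nat) \<Rightarrow> bool" where
  "RC p x m \<longleftrightarrow> finite (vars x) \<and> finite (vars m) \<and> (\<forall>u\<in>vars m. Avar (snd u)) \<and> (\<forall>u. TAodd p u \<longrightarrow> m u \<le> 1)
     \<and> mono_sum (Aweight p) (tright m) \<le> mono_sum (Aweight p) x
     \<and> mono_sum (Aweight p) (tleft m) \<le> mono_sum (Adeg p) (tright m) + mono_sum (Aweight p) x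
     \<and> mono_sum (Adeg p) (tleft m) + mono_sum (Adeg p) (tright m) = mono_sum (Adeg p) x"

lemma RC0: "RC p (\<lambda>_. 0) (\<lambda>_. 0)"
  by (simp add: RC_def tleft_zero tright_zero mono_sum_zero vars_def)

lemma RCadd:
  assumes "RC p x a" "RC p y b" "\<not>(\<exists>v. TAodd p v \<and> a v \<noteq> 0 \<and> b v \<noteq> 0)"
  shows "RC p (\<lambda>v. x v + y v) (\<lambda>v. a v + b v)"
proof -
  have f: "finite (vars x)" "finite (vars y)" "finite (vars a)" "finite (vars b)"
    using assms by (auto simp: RC_def)
  have fl: "finite (vars (tleft a))" "finite (vars (tleft b))" "finite (vars (tright a))" "finite (vars (tright b))"
    using f by (auto intro: fin_tleft fin_tright)
  have o: "\<forall>u. TAodd p u \<longrightarrow> a u + b u \<le> 1"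
  proof (intro allI impI)
    fix u assume u: "TAodd p u"
    have "\<forall>u. TAodd p u \<longrightarrow> a u \<le> 1" "\<forall>u. TAodd p u \<longrightarrow> b u \<le> 1"
      using assms(1,2) unfolding RC_def by blast+
    then have "a u \<le> 1" "b u \<le> 1" using u by blast+
    moreover have "a u = 0 \<or> b u = 0" using assms(3) u by blast
    ultimately show "a u + b u \<le> 1" by auto
  qed
  show ?thesis using assms f fl o
    unfolding RC_def tleft_add tright_add
    by (simp add: mono_sum_add vars_add ball_Un)
qed

lemma supp_coprod_gen:
  "supp (Acoprod_gen p (i, j) :: 'k::comm_ring_1 TAelem) \<subseteq> {dl (False, (i, j)) 1} \<union>
     {(\<lambda>u. dl (False, (i, k)) 1 u + dl (True, (k, j)) 1 u) | k. j + 1 \<le> k \<and> k < i} \<union> {dl (True, (i, j)) 1}"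
proof
  fix m assume m: "m \<in> supp (Acoprod_gen p (i, j) :: 'k TAelem)"
  have e: "\<And>k. smult (TAodd p) (svar (False, (i, k))) (svar (True, (k, j))) =
     mon (\<lambda>u. dl (False, (i, k)) 1 u + dl (True, (k, j)) 1 u) (sgn_coeff (TAodd p) (dl (False, (i, k)) 1) (dl (True, (k, j)) 1) * 1 * (1::'k))"
    unfolding svar_mon by (rule smult_mon)
  from m have "svar (False, (i, j)) m + (\<Sum>k \<in> {j + 1..<i}. smult (TAodd p) (svar (False, (i, k))) (svar (True, (k, j))) m)
          + svar (True, (i, j)) m \<noteq> (0::'k)"
    by (simp add: supp_def Acoprod_gen_def)
  then have "\<not> (svar (False, (i, j)) m = (0::'k) \<and> (\<Sum>k \<in> {j + 1..<i}. smult (TAodd p) (svar (False, (i, k))) (svar (True, (k, j))) m) = (0::'k)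
      \<and> svar (True, (i, j)) m = (0::'k))" by auto
  then consider "svar (False, (i, j)) m \<noteq> (0::'k)"
    | "(\<Sum>k \<in> {j + 1..<i}. smult (TAodd p) (svar (False, (i, k))) (svar (True, (k, j))) m) \<noteq> (0::'k)"
    | "svar (True, (i, j)) m \<noteq> (0::'k)"
    by blast
  then show "m \<in> {dl (False, (i, j)) 1} \<union>
     {(\<lambda>u. dl (False, (i, k)) 1 u + dl (True, (k, j)) 1 u) | k. j + 1 \<le> k \<and> k < i} \<union> {dl (True, (i, j)) 1}"
  proof cases
    case 1 then show ?thesis by (simp add: svar_mon mon_def split: if_splits)
  next
    case 2
    then obtain k where k: "k \<in> {j + 1..<i}" "smult (TAodd p) (svar (False, (i, k))) (svar (True, (k, j))) m \<noteq> (0::'k)"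
      by (rule sum.not_neutral_contains_not_neutral)
    then have "m = (\<lambda>u. dl (False, (i, k)) 1 u + dl (True, (k, j)) 1 u)"
      unfolding e by (simp add: mon_def split: if_splits)
    then show ?thesis using k by auto
  next
    case 3 then show ?thesis by (simp add: svar_mon mon_def split: if_splits)
  qed
qed

lemma finite_supp_coprod_gen: "finite (supp (Acoprod_gen p v :: 'k::comm_ring_1 TAelem))"
proof (cases v)
  case (Pair i j)
  have fk: "finite {k::nat. j + 1 \<le> k \<and> k < i}" by (rule finite_subset[of _ "{..<i}"]) auto
  have "finite {(\<lambda>u. dl (False, (i, k)) 1 u + dl (True, (k, j)) 1 u) | k. j + 1 \<le> k \<and> k < i}"
    using fk by (rule finite_image_set)
  then have "finite ({dl (False, (i, j)) 1} \<union>
     {(\<lambda>u. dl (False, (i, k)) 1 u + dl (True, (k, j)) 1 u) | k. j + 1 \<le> k \<and> k < i} \<union> {dl (True, (i, j)) 1})"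
    by (simp only: finite_Un finite_insert finite.emptyI simp_thms)
  then show ?thesis unfolding Pair by (rule finite_subset[OF supp_coprod_gen])
qed

lemma Adeg_nonneg: "1 \<le> p \<Longrightarrow> 1 \<le> j \<Longrightarrow> j < i \<Longrightarrow> 0 \<le> Adeg p (i, j)"
proof -
  assume a: "1 \<le> p" "1 \<le> j" "j < i"
  have h1: "(1::int) \<le> int p ^ (i - 2)" "(0::int) \<le> int p ^ (i - j) - 1" "(0::int) \<le> 2 ^ (i - j) - 1"
    "(0::int) \<le> int p ^ (j - 2)"
  proof -
    have p1: "(1::int) \<le> int p" using a by simp
    show "(1::int) \<le> int p ^ (i - 2)" using one_le_power[OF p1] .
    show "(0::int) \<le> int p ^ (i - j) - 1" using one_le_power[OF p1, of "i - j"] by linarith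
    show "(0::int) \<le> 2 ^ (i - j) - 1" by simp
    show "(0::int) \<le> int p ^ (j - 2)" by simp
  qed
  have "0 \<le> 2 * int p ^ (j - 2) * (int p ^ (i - j) - 1)" using h1 by simp
  moreover have "(0::int) \<le> 2 ^ (j - 1) * (2 ^ (i - j) - 1)" using h1 by simp
  moreover have "0 \<le> 2 * int p ^ (i - 2) - 1" using h1 by linarith
  ultimately show ?thesis unfolding Adeg_def by simp
qed

lemma mid_arith:
  assumes "1 \<le> j" "j < k" "k < i" "1 \<le> p"
  shows "Aweight p (k, j) = Aweight p (i, j) \<and> Aweight p (i, k) \<le> Adeg p (k, j) + Aweight p (i, j)
         \<and> Adeg p (i, k) + Adeg p (k, j) = Adeg p (i, j)"
proof (cases "odd p")
  case True
  have s1: "int p ^ (k - 2) * int p ^ (i - k) = int p ^ (i - 2)"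
    using pow_split2[of 2 k i "int p"] assms by simp
  show ?thesis
  proof (cases "j = 1")
    case True
    then show ?thesis using \<open>odd p\<close> assms s1 by (simp add: Aweight_def Adeg_def algebra_simps)
  next
    case False
    have s2: "int p ^ (j - 2) * int p ^ (k - j) = int p ^ (k - 2)"
      using pow_split2[of 2 j k "int p"] assms False by simp
    have s3: "int p ^ (j - 2) * int p ^ (i - j) = int p ^ (i - 2)"
      using pow_split2[of 2 j i "int p"] assms False by simp
    show ?thesis using \<open>odd p\<close> assms s1 s2 s3 False by (simp add: Aweight_def Adeg_def algebra_simps)
  qed
next
  case False
  have s1: "(2::int) ^ (k - 1) * 2 ^ (i - k) = 2 ^ (i - 1)"
    using pow_split2[of 1 k i 2] assms by simp
  have s2: "(2::int) ^ (j - 1) * 2 ^ (k - j) = 2 ^ (k - 1)"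
    using pow_split2[of 1 j k 2] assms by simp
  have s3: "(2::int) ^ (j - 1) * 2 ^ (i - j) = 2 ^ (i - 1)"
    using pow_split2[of 1 j i 2] assms by simp
  show ?thesis using False assms s1 s2 s3 by (simp add: Aweight_def Adeg_def algebra_simps)
qed

lemma RC_gen:
  assumes "Avar v" "a \<in> supp (Acoprod_gen p v :: 'k::comm_ring_1 TAelem)" "1 \<le> p"
  shows "RC p (dl v 1) a"
proof -
  obtain i j where v: "v = (i, j)" "1 \<le> j" "j < i" using assms(1) by (cases v) (auto simp: Avar_def)
  have wn: "0 \<le> Aweight p (i, j)" by (rule Aweight_nonneg)
  have dn: "0 \<le> Adeg p (i, j)" using Adeg_nonneg v assms by auto
  have fx: "finite (vars (dl v 1))" by (simp add: vars_dl)
  have "a \<in> {dl (False, (i, j)) 1} \<union>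
     {(\<lambda>u. dl (False, (i, k)) 1 u + dl (True, (k, j)) 1 u) | k. j + 1 \<le> k \<and> k < i} \<union> {dl (True, (i, j)) 1}"
  proof -
    have "a \<in> supp (Acoprod_gen p (i, j) :: 'k TAelem)" using assms(2) v(1) by simp
    then show ?thesis by (rule subsetD[OF supp_coprod_gen])
  qed
  then have "a = dl (False, (i, j)) 1 \<or> (\<exists>k. a = (\<lambda>u. dl (False, (i, k)) 1 u + dl (True, (k, j)) 1 u) \<and> j + 1 \<le> k \<and> k < i)
     \<or> a = dl (True, (i, j)) 1" by (simp only: Un_iff singleton_iff mem_Collect_eq disj_assoc)
  then consider
    "a = dl (False, (i, j)) 1" | k where "j + 1 \<le> k" "k < i" "a = (\<lambda>u. dl (False, (i, k)) 1 u + dl (True, (k, j)) 1 u)"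
    | "a = dl (True, (i, j)) 1" by blast
  then show ?thesis
  proof cases
    case 1 show ?thesis unfolding RC_def 1 v(1) tleft_F tright_F mono_sum_dl mono_sum_zero vars_dl
      using v wn by (simp add: Avar_def dl_def)
  next
    case (2 k)
    have ar: "Aweight p (k, j) = Aweight p (i, j) \<and> Aweight p (i, k) \<le> Adeg p (k, j) + Aweight p (i, j)
         \<and> Adeg p (i, k) + Adeg p (k, j) = Adeg p (i, j)" using mid_arith[of j k i p] 2 v assms by simp
    have va: "vars a = {(False, (i, k)), (True, (k, j))}" using 2 by (auto simp: vars_def dl_def)
    have o: "\<forall>u. TAodd p u \<longrightarrow> a u \<le> 1" using 2 by (auto simp: dl_def)
    have tl: "tleft a = dl (i, k) 1" using 2 by (auto simp: tleft_def dl_def fun_eq_iff)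
    have tr: "tright a = dl (k, j) 1" using 2 by (auto simp: tright_def dl_def fun_eq_iff)
    have av: "\<forall>u\<in>vars a. Avar (snd u)" using va v 2 by (auto simp: Avar_def)
    show ?thesis unfolding RC_def tl tr v(1) mono_sum_dl
      using ar va o av by (simp add: vars_dl)
  next
    case 3 show ?thesis unfolding RC_def 3 v(1) tleft_T tright_T mono_sum_dl mono_sum_zero vars_dl
      using v wn dn by (simp add: Avar_def dl_def)
  qed
qed

lemma supp_sext: "supp (sext od h f) \<subseteq> (\<Union>x\<in>supp f. supp (smono_img od h x))"
proof
  fix m assume "m \<in> supp (sext od h f)"
  then have "(\<Sum>x \<in> supp f. f x * smono_img od h x m) \<noteq> 0" by (simp add: supp_def sext_def)
  then obtain x where "x \<in> supp f" "f x * smono_img od h x m \<noteq> 0"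
    by (rule sum.not_neutral_contains_not_neutral)
  then show "m \<in> (\<Union>x\<in>supp f. supp (smono_img od h x))" by (auto simp: supp_def)
qed

lemma coprod_props:
  fixes f :: "'k::comm_ring_1 Aelem"
  assumes p: "1 \<le> p" and f: "f \<in> A_p p"
  shows "Acoprod p f \<in> TA_p p \<and> (\<forall>m\<in>supp (Acoprod p f). \<exists>x\<in>supp f. RC p x m)"
proof -
  have fs: "finite (supp f)" and vf: "\<And>x. x \<in> supp f \<Longrightarrow> valid_mono Avar (Aodd p) x"
    using f by (auto simp: A_p_iff)
  have S: "\<And>x. x \<in> supp f \<Longrightarrow> supp (smono_img (TAodd p) (Acoprod_gen p :: _ \<Rightarrow> 'k TAelem) x) \<subseteq> {m. RC p x m}"
  proof -
    fix x assume x: "x \<in> supp f"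
    show "supp (smono_img (TAodd p) (Acoprod_gen p :: _ \<Rightarrow> 'k TAelem) x) \<subseteq> {m. RC p x m}"
    proof (rule supp_smono_img_R[where R = "RC p"])
      show "RC p (\<lambda>_. 0) (\<lambda>_. 0)" by (rule RC0)
      show "\<And>x y a b. RC p x a \<Longrightarrow> RC p y b \<Longrightarrow> \<not>(\<exists>v. TAodd p v \<and> a v \<noteq> 0 \<and> b v \<noteq> 0) \<Longrightarrow>
           RC p (\<lambda>v. x v + y v) (\<lambda>v. a v + b v)" by (rule RCadd)
      show "\<And>v a. v \<in> vars x \<Longrightarrow> a \<in> supp (Acoprod_gen p v) \<Longrightarrow> RC p (dl v 1) a"
        using vf[OF x] p by (intro RC_gen) (auto simp: valid_mono_def)
      show "finite (vars x)" using vf[OF x] by (simp add: valid_mono_def)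
    qed
  qed
  have sub: "supp (Acoprod p f) \<subseteq> (\<Union>x\<in>supp f. supp (smono_img (TAodd p) (Acoprod_gen p :: _ \<Rightarrow> 'k TAelem) x))"
    unfolding Acoprod_def by (rule supp_sext[of "TAodd p" "Acoprod_gen p" f])
  have fin: "finite (supp (Acoprod p f))"
    using fs vf by (intro finite_subset[OF sub] finite_UN_I finite_supp_smono_img finite_supp_coprod_gen)
       (auto simp: valid_mono_def)
  have R: "\<forall>m\<in>supp (Acoprod p f). \<exists>x\<in>supp f. RC p x m" using sub S by blast
  have "\<forall>m\<in>supp (Acoprod p f). valid_mono Avar (Aodd p) (tleft m) \<and> valid_mono Avar (Aodd p) (tright m)"
  proof
    fix m assume "m \<in> supp (Acoprod p f)"
    then obtain x where "RC p x m" using R by blast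
    then have r: "finite (vars m)" "\<forall>u\<in>vars m. Avar (snd u)" "\<forall>u. TAodd p u \<longrightarrow> m u \<le> 1"
      by (auto simp: RC_def)
    have "vars (tleft m) \<subseteq> {v. Avar v}"
    proof
      fix w assume "w \<in> vars (tleft m)"
      then obtain u where "u \<in> vars m" "w = snd u" using vars_tleft[of m] by blast
      then show "w \<in> {v. Avar v}" using r(2) by simp
    qed
    moreover have "vars (tright m) \<subseteq> {v. Avar v}"
    proof
      fix w assume "w \<in> vars (tright m)"
      then obtain u where "u \<in> vars m" "w = snd u" using vars_tright[of m] by blast
      then show "w \<in> {v. Avar v}" using r(2) by simp
    qed
    ultimately show "valid_mono Avar (Aodd p) (tleft m) \<and> valid_mono Avar (Aodd p) (tright m)"
      using r fin_tleft fin_tright unfolding valid_mono_def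
      by (auto simp: tleft_def tright_def TAodd_def)
  qed
  then show ?thesis using fin R by (simp add: TA_p_def)
qed

lemma E3_Fil: "1 \<le> p \<Longrightarrow> E3 p (Fil_A p :: int \<Rightarrow> 'k::comm_ring_1 Aelem set)"
  unfolding E3_def
proof (intro allI ballI)
  fix i and f :: "'k Aelem" assume p: "1 \<le> p" and f: "f \<in> Fil_A p i"
  then have fA: "f \<in> A_p p" by (simp add: Fil_A_def)
  have "\<forall>m\<in>supp (Acoprod p f). mono_sum (Aweight p) (tright m) \<le> i"
  proof
    fix m assume "m \<in> supp (Acoprod p f)"
    then obtain x where "x \<in> supp f" "RC p x m" using coprod_props[OF p fA] by blast
    then show "mono_sum (Aweight p) (tright m) \<le> i" using f by (auto simp: RC_def Fil_A_def)
  qed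
  then show "Acoprod p f \<in> TA_p p \<and> (\<forall>m\<in>supp (Acoprod p f). mono_sum (Aweight p) (tright m) \<le> i)"
    using coprod_props[OF p fA] by simp
qed

lemma E4_Fil: "1 \<le> p \<Longrightarrow> E4 p (Fil_A p :: int \<Rightarrow> 'k::comm_ring_1 Aelem set)"
  unfolding E4_def
proof (intro allI ballI impI)
  fix i k and f :: "'k Aelem" assume p: "1 \<le> p" and f: "f \<in> Fil_A p i" and h: "homog (Adeg p) k f"
  then have fA: "f \<in> A_p p" by (simp add: Fil_A_def)
  have "\<forall>m\<in>supp (Acoprod p f). \<exists>j::int. mono_sum (Aweight p) (tleft m) \<le> j + i \<and>
          mono_sum (Adeg p) (tleft m) = k - j \<and> mono_sum (Adeg p) (tright m) = j"
  proof
    fix m assume "m \<in> supp (Acoprod p f)"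
    then obtain x where x: "x \<in> supp f" "RC p x m" using coprod_props[OF p fA] by blast
    have "mono_sum (Aweight p) x \<le> i" "mono_sum (Adeg p) x = k" using x f h by (auto simp: Fil_A_def homog_def)
    then show "\<exists>j::int. mono_sum (Aweight p) (tleft m) \<le> j + i \<and>
          mono_sum (Adeg p) (tleft m) = k - j \<and> mono_sum (Adeg p) (tright m) = j"
      using x(2) by (intro exI[of _ "mono_sum (Adeg p) (tright m)"]) (auto simp: RC_def)
  qed
  then show "Acoprod p f \<in> TA_p p \<and> (\<forall>m\<in>supp (Acoprod p f). \<exists>j::int. mono_sum (Aweight p) (tleft m) \<le> j + i \<and>
          mono_sum (Adeg p) (tleft m) = k - j \<and> mono_sum (Adeg p) (tright m) = j)"
    using coprod_props[OF p fA] by simp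
qed


definition RS :: "nat \<Rightarrow> (nat \<times> nat \<Rightarrow> nat) \<Rightarrow> (bool \<times> nat \<Rightarrow> nat) \<Rightarrow> bool" where
  "RS p x s \<longleftrightarrow> finite (vars x) \<and> finite (vars s) \<and> vars s \<subseteq> {u. Svar p u} \<and> (\<forall>u. Sodd p u \<longrightarrow> s u \<le> 1)
     \<and> mono_sum (Sweight p) s \<le> mono_sum (Aweight p) x"

lemma RS0: "RS p (\<lambda>_. 0) (\<lambda>_. 0)"
  by (simp add: RS_def mono_sum_zero vars_def)

lemma RSadd:
  assumes "RS p x a" "RS p y b" "\<not>(\<exists>v. Sodd p v \<and> a v \<noteq> 0 \<and> b v \<noteq> 0)"
  shows "RS p (\<lambda>v. x v + y v) (\<lambda>v. a v + b v)"
proof -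
  have f: "finite (vars x)" "finite (vars y)" "finite (vars a)" "finite (vars b)"
    using assms by (auto simp: RS_def)
  have o: "\<forall>u. Sodd p u \<longrightarrow> a u + b u \<le> 1"
    using assms by (auto simp: RS_def) (metis add.right_neutral add_0)
  show ?thesis using assms f o unfolding RS_def
    by (simp add: mono_sum_add vars_add)
qed

lemma neg_svar_mon: "(\<lambda>m. - svar v m) = mon (dl v 1) (-1::'k::comm_ring_1)"
  by (auto simp: svar_mon mon_def)

lemma rho_gen_mon:
  assumes "1 \<le> p" "Avar (i, j)"
  shows "rho_gen p (i, j) = (if odd p \<and> j = 1 then mon (dl (True, i - 2) 1) (-1::'k::comm_ring_1)
          else if odd p then mon (dl (False, i - j) (p ^ (j - 2))) 1 else mon (dl (False, i - j) (2 ^ (j - 1))) 1)"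
proof -
  have ns: "\<not> Sodd p (False, n)" for n by (simp add: Sodd_def)
  have sp: "spow (Sodd p) (svar (False, n)) e = mon (dl (False, n) e) (1::'k)" for n e
    unfolding svar_mon using spow_mon_dl[of "Sodd p" "(False, n)" e "1::'k"] ns by simp
  consider "odd p" "j = 1" | "odd p" "j \<noteq> 1" | "even p" by blast
  then show ?thesis
  proof cases
    case 1
    then have "rho_gen p (i, j) = (\<lambda>m. - svar (True, i - 2) m)" by (simp add: rho_gen_def)
    then have "rho_gen p (i, j) = mon (dl (True, i - 2) 1) (-1::'k)"
      using neg_svar_mon[of "(True, i - 2)"] by (rule trans)
    then show ?thesis using 1 by simp
  next
    case 2
    then have "(rho_gen p (i, j) :: 'k Selem) = spow (Sodd p) (svar (False, i - j)) (p ^ (j - 2))" by (simp add: rho_gen_def)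
    then show ?thesis using 2 sp by simp
  next
    case 3
    then have "(rho_gen p (i, j) :: 'k Selem) = spow (Sodd p) (svar (False, i - j)) (2 ^ (j - 1))" by (simp add: rho_gen_def)
    then show ?thesis using 3 sp by simp
  qed
qed

lemma RS_gen:
  assumes "Avar v" "a \<in> supp (rho_gen p v :: 'k::comm_ring_1 Selem)" "1 \<le> p"
  shows "RS p (dl v 1) a"
proof -
  obtain i j where v: "v = (i, j)" "1 \<le> j" "j < i" using assms(1) by (cases v) (auto simp: Avar_def)
  have fx: "finite (vars (dl v 1))" by (simp add: vars_dl)
  have sv: "Svar p (False, i - j)" using v by (simp add: Svar_def)
  have ppos: "p ^ (j - 2) \<noteq> 0" using assms by simp
  consider "odd p" "j = 1" | "odd p" "j \<noteq> 1" | "even p" by blast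
  then show ?thesis
  proof cases
    case 1
    then have a: "a = dl (True, i - 2) 1" using assms(2) rho_gen_mon[where 'k='k, OF assms(3), of i j] v
      by (simp add: Avar_def supp_mon split: if_splits)
    show ?thesis unfolding RS_def a v(1) vars_dl mono_sum_dl
      using 1 v by (auto simp: Svar_def Sweight_def Aweight_def dl_def)
  next
    case 2
    then have a: "a = dl (False, i - j) (p ^ (j - 2))" using assms(2) rho_gen_mon[where 'k='k, OF assms(3), of i j] v
      by (simp add: Avar_def supp_mon split: if_splits)
    show ?thesis unfolding RS_def a v(1) vars_dl mono_sum_dl
      using 2 v sv ppos by (auto simp: Sodd_def Sweight_def Aweight_def dl_def)
  next
    case 3
    then have a: "a = dl (False, i - j) (2 ^ (j - 1))" using assms(2) rho_gen_mon[where 'k='k, OF assms(3), of i j] v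
      by (simp add: Avar_def supp_mon split: if_splits)
    show ?thesis unfolding RS_def a v(1) vars_dl mono_sum_dl
      using 3 v sv by (auto simp: Sodd_def Sweight_def Aweight_def dl_def)
  qed
qed

lemma finite_supp_rho_gen:
  assumes "1 \<le> p" "Avar v"
  shows "finite (supp (rho_gen p v :: 'k::comm_ring_1 Selem))"
  using rho_gen_mon[where 'k='k, OF assms(1), of "fst v" "snd v"] assms(2) by (simp add: supp_mon)

lemma S_p_iff: "f \<in> S_p p \<longleftrightarrow> finite (supp f) \<and> (\<forall>m\<in>supp f. valid_mono (Svar p) (Sodd p) m)"
  by (simp add: S_p_def salg_carrier_def)

lemma rho_sub:
  fixes f :: "'k::comm_ring_1 Aelem"
  assumes p: "1 \<le> p" and f: "f \<in> Fil_A p i"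
  shows "rho p f \<in> Fil_S p i"
proof -
  have fs: "finite (supp f)" and vf: "\<And>x. x \<in> supp f \<Longrightarrow> valid_mono Avar (Aodd p) x \<and> mono_sum (Aweight p) x \<le> i"
    using f by (auto simp: Fil_A_def A_p_iff)
  have S: "\<And>x. x \<in> supp f \<Longrightarrow> supp (smono_img (Sodd p) (rho_gen p :: _ \<Rightarrow> 'k Selem) x) \<subseteq> {m. RS p x m}"
  proof -
    fix x assume x: "x \<in> supp f"
    show "supp (smono_img (Sodd p) (rho_gen p :: _ \<Rightarrow> 'k Selem) x) \<subseteq> {m. RS p x m}"
    proof (rule supp_smono_img_R[where R = "RS p"])
      show "RS p (\<lambda>_. 0) (\<lambda>_. 0)" by (rule RS0)
      show "\<And>x y a b. RS p x a \<Longrightarrow> RS p y b \<Longrightarrow> \<not>(\<exists>v. Sodd p v \<and> a v \<noteq> 0 \<and> b v \<noteq> 0) \<Longrightarrow>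
           RS p (\<lambda>v. x v + y v) (\<lambda>v. a v + b v)" by (rule RSadd)
      show "\<And>v a. v \<in> vars x \<Longrightarrow> a \<in> supp (rho_gen p v) \<Longrightarrow> RS p (dl v 1) a"
        using vf[OF x] p by (intro RS_gen) (auto simp: valid_mono_def)
      show "finite (vars x)" using vf[OF x] by (simp add: valid_mono_def)
    qed
  qed
  have sub: "supp (rho p f) \<subseteq> (\<Union>x\<in>supp f. supp (smono_img (Sodd p) (rho_gen p :: _ \<Rightarrow> 'k Selem) x))"
    unfolding rho_def by (rule supp_sext)
  have fin: "finite (supp (rho p f))"
    using fs vf p by (intro finite_subset[OF sub] finite_UN_I finite_supp_smono_img finite_supp_rho_gen)
       (auto simp: valid_mono_def)
  have "\<forall>m\<in>supp (rho p f). valid_mono (Svar p) (Sodd p) m \<and> mono_sum (Sweight p) m \<le> i"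
  proof
    fix m assume "m \<in> supp (rho p f)"
    then obtain x where "x \<in> supp f" "RS p x m" using sub S by blast
    then show "valid_mono (Svar p) (Sodd p) m \<and> mono_sum (Sweight p) m \<le> i"
      using vf by (force simp: RS_def valid_mono_def)
  qed
  then show ?thesis using fin by (simp add: Fil_S_def S_p_iff)
qed


definition psi :: "nat \<Rightarrow> bool \<times> nat \<Rightarrow> nat \<times> nat" where
  "psi p u = (case u of (b, n) \<Rightarrow> if b then (if odd p then (n + 2, 1) else (0, 0))
                                     else (if odd p then (n + 2, 2) else (n + 1, 1)))"

definition gg :: "nat \<Rightarrow> nat \<times> nat \<Rightarrow> bool \<times> nat" where
  "gg p v = (case v of (i, j) \<Rightarrow> if odd p then (if j = 1 then (True, i - 2) else (False, i - 2)) else (False, i - 1))"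

definition pat :: "nat \<Rightarrow> nat \<times> nat \<Rightarrow> bool" where
  "pat p v \<longleftrightarrow> Avar v \<and> (if odd p then snd v \<le> 2 else snd v = 1)"

definition Phi :: "nat \<Rightarrow> (bool \<times> nat \<Rightarrow> nat) \<Rightarrow> nat \<times> nat \<Rightarrow> nat" where
  "Phi p s = (\<lambda>v. if pat p v then s (gg p v) else 0)"

lemma valid_odd: "valid_mono V od m \<Longrightarrow> od u \<Longrightarrow> m u \<le> 1"
  unfolding valid_mono_def by blast

lemma psi_gg: "pat p v \<Longrightarrow> psi p (gg p v) = v"
  by (cases v) (auto simp: pat_def Avar_def psi_def gg_def)

lemma gg_psi: "Svar p u \<Longrightarrow> pat p (psi p u) \<and> gg p (psi p u) = u"
  by (cases u) (auto simp: pat_def Avar_def psi_def gg_def Svar_def)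

lemma not_pat_psi: "\<not> Svar p u \<Longrightarrow> \<not> pat p (psi p u)"
  by (cases u) (auto simp: pat_def Avar_def psi_def Svar_def)

lemma Phi_psi:
  assumes "valid_mono (Svar p) (Sodd p) s"
  shows "Phi p s (psi p u) = s u"
proof (cases "Svar p u")
  case True then show ?thesis using gg_psi[OF True] by (simp add: Phi_def)
next
  case False
  then have "u \<notin> vars s" using assms by (auto simp: valid_mono_def)
  then have "s u = 0" by (simp add: vars_def)
  then show ?thesis using not_pat_psi[OF False] by (simp add: Phi_def)
qed

lemma Phi_psi_fun:
  assumes "valid_mono (Svar p) (Sodd p) s"
  shows "(\<lambda>u. Phi p s (psi p u)) = s"
  using Phi_psi[OF assms] by auto

lemma vars_Phi:
  assumes "valid_mono (Svar p) (Sodd p) s"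
  shows "vars (Phi p s) = psi p ` vars s"
proof
  show "vars (Phi p s) \<subseteq> psi p ` vars s"
  proof
    fix v assume v: "v \<in> vars (Phi p s)"
    then have pv: "pat p v" and sv: "s (gg p v) \<noteq> 0" by (auto simp: vars_def Phi_def split: if_splits)
    then have "gg p v \<in> vars s" by (simp add: vars_def)
    moreover have "v = psi p (gg p v)" using psi_gg[OF pv] by simp
    ultimately show "v \<in> psi p ` vars s" by blast
  qed
  show "psi p ` vars s \<subseteq> vars (Phi p s)"
  proof
    fix v assume "v \<in> psi p ` vars s"
    then obtain u where u: "u \<in> vars s" "v = psi p u" by blast
    then have "Phi p s v = s u" using Phi_psi[OF assms] by simp
    then show "v \<in> vars (Phi p s)" using u(1) by (simp add: vars_def)
  qed
qed

lemma inj_psi: "inj_on (psi p) {u. Svar p u}"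
  by (rule inj_on_inverseI[where g = "gg p"]) (use gg_psi in auto)

lemma Aweight_psi: "Svar p u \<Longrightarrow> Aweight p (psi p u) = Sweight p u"
  by (cases u) (auto simp: psi_def Aweight_def Sweight_def Svar_def)

lemma Phi_valid:
  assumes "valid_mono (Svar p) (Sodd p) s"
  shows "valid_mono Avar (Aodd p) (Phi p s)"
proof -
  have fin: "finite (vars (Phi p s))" using assms vars_Phi[OF assms] by (simp add: valid_mono_def)
  have av: "vars (Phi p s) \<subseteq> {v. Avar v}"
    by (auto simp: vars_def Phi_def pat_def split: if_splits)
  have "Phi p s v \<le> 1" if "Aodd p v" for v
  proof (cases "pat p v")
    case True
    obtain i j where v: "v = (i, j)" by (cases v)
    have "odd p" "j = 1" using that v by (auto simp: Aodd_def)
    then have "Sodd p (gg p v)" using v by (simp add: gg_def Sodd_def)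
    then have "s (gg p v) \<le> 1" using assms by (rule valid_odd[rotated])
    then show ?thesis using True by (simp add: Phi_def)
  next
    case False then show ?thesis by (simp add: Phi_def)
  qed
  then show ?thesis using fin av by (simp add: valid_mono_def)
qed

lemma Phi_weight:
  assumes "valid_mono (Svar p) (Sodd p) s"
  shows "mono_sum (Aweight p) (Phi p s) = mono_sum (Sweight p) s"
proof -
  have sv: "vars s \<subseteq> {u. Svar p u}" using assms by (simp add: valid_mono_def)
  have inj: "inj_on (psi p) (vars s)" using inj_psi sv by (rule inj_on_subset)
  have "mono_sum (Aweight p) (Phi p s) = (\<Sum>v\<in>psi p ` vars s. int (Phi p s v) * Aweight p v)"
    unfolding mono_sum_def vars_Phi[OF assms] ..
  also have "\<dots> = (\<Sum>u\<in>vars s. int (Phi p s (psi p u)) * Aweight p (psi p u))"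
    by (rule sum.reindex[OF inj, unfolded comp_def])
  also have "\<dots> = (\<Sum>u\<in>vars s. int (s u) * Sweight p u)"
    by (rule sum.cong) (use sv Phi_psi[OF assms] Aweight_psi in auto)
  finally show ?thesis by (simp add: mono_sum_def)
qed

lemma rho_Phi:
  assumes p: "1 \<le> p" and s: "valid_mono (Svar p) (Sodd p) s"
  shows "\<exists>c. c \<noteq> 0 \<and> smono_img (Sodd p) (rho_gen p :: _ \<Rightarrow> 'k::field Selem) (Phi p s) = mon s c"
proof -
  let ?x = "Phi p s"
  let ?c = "\<lambda>v. if odd p \<and> snd v = 1 then (-1::'k) else 1"
  have vx: "valid_mono Avar (Aodd p) ?x" by (rule Phi_valid[OF s])
  have patv: "\<And>v. v \<in> vars ?x \<Longrightarrow> pat p v" by (auto simp: vars_def Phi_def split: if_splits)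
  have "\<exists>c' M. c' \<noteq> 0 \<and> smono_img (Sodd p) (rho_gen p :: _ \<Rightarrow> 'k Selem) ?x = mon M c'
     \<and> (\<forall>v\<in>vars ?x. M (gg p v) = ?x v) \<and> (\<forall>u. u \<notin> gg p ` vars ?x \<longrightarrow> M u = 0)"
  proof (rule smono_img_exact)
    show "finite (vars ?x)" using vx by (simp add: valid_mono_def)
    show "rho_gen p v = mon (dl (gg p v) 1) (?c v)" if "v \<in> vars ?x" for v
    proof -
      obtain i j where v: "v = (i, j)" by (cases v)
      have pv: "pat p (i, j)" using patv[OF that] v by simp
      then have av: "Avar (i, j)" by (simp add: pat_def)
      have jj: "odd p \<longrightarrow> j = 1 \<or> j = 2" using pv by (auto simp: pat_def Avar_def)
      show ?thesis using rho_gen_mon[where 'k='k, OF p av] pv v jj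
        by (auto simp: pat_def gg_def Avar_def)
    qed
    show "?c v \<noteq> 0" for v by simp
    show "inj_on (gg p) (vars ?x)"
    proof (rule inj_onI)
      fix v w assume "v \<in> vars ?x" "w \<in> vars ?x" "gg p v = gg p w"
      then show "v = w" using psi_gg patv by metis
    qed
    show "?x v \<le> 1" if "v \<in> vars ?x" "Sodd p (gg p v)" for v
    proof -
      have "s (gg p v) \<le> 1" using s that(2) by (rule valid_odd)
      then show ?thesis by (simp add: Phi_def)
    qed
  qed
  then obtain c' M where cM: "c' \<noteq> 0" "smono_img (Sodd p) (rho_gen p :: _ \<Rightarrow> 'k Selem) ?x = mon M c'"
     "\<forall>v\<in>vars ?x. M (gg p v) = ?x v" "\<forall>u. u \<notin> gg p ` vars ?x \<longrightarrow> M u = 0" by blast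
  have "M = s"
  proof
    fix u
    show "M u = s u"
    proof (cases "u \<in> gg p ` vars ?x")
      case True
      then obtain v where v: "v \<in> vars ?x" "u = gg p v" by blast
      then show ?thesis using cM(3) patv[OF v(1)] by (simp add: Phi_def)
    next
      case False
      then have "M u = 0" using cM(4) by blast
      moreover have "s u = 0"
      proof (rule ccontr)
        assume su: "s u \<noteq> 0"
        then have uv: "u \<in> vars s" by (simp add: vars_def)
        then have "Svar p u" using s by (auto simp: valid_mono_def)
        then have "gg p (psi p u) = u" using gg_psi by blast
        moreover have "psi p u \<in> vars ?x" using uv vars_Phi[OF s] by blast
        ultimately show False using False by (metis image_eqI)
      qed
      ultimately show ?thesis by simp
    qed
  qed
  then show ?thesis using cM by blast
qed

lemma rho_surj:
  fixes f :: "'k::field Selem"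
  assumes p: "1 \<le> p" and f: "f \<in> Fil_S p i"
  shows "f \<in> rho p ` Fil_A p i"
proof -
  have fs: "finite (supp f)" and vf: "\<And>s. s \<in> supp f \<Longrightarrow> valid_mono (Svar p) (Sodd p) s"
    and wf: "\<And>s. s \<in> supp f \<Longrightarrow> mono_sum (Sweight p) s \<le> i"
    using f by (auto simp: Fil_S_def S_p_iff)
  have "\<forall>s\<in>supp f. \<exists>c. c \<noteq> 0 \<and> smono_img (Sodd p) (rho_gen p :: _ \<Rightarrow> 'k Selem) (Phi p s) = mon s c"
    using rho_Phi[OF p] vf by blast
  then obtain C where C: "\<And>s. s \<in> supp f \<Longrightarrow> C s \<noteq> 0 \<and> smono_img (Sodd p) (rho_gen p :: _ \<Rightarrow> 'k Selem) (Phi p s) = mon s (C s)"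
    by metis
  define G :: "'k Aelem" where "G = (\<lambda>x. if x \<in> Phi p ` supp f then f (\<lambda>u. x (psi p u)) / C (\<lambda>u. x (psi p u)) else 0)"
  have GPhi: "G (Phi p s) = f s / C s" if "s \<in> supp f" for s
    using that Phi_psi_fun[OF vf[OF that]] by (simp add: G_def)
  have inj: "inj_on (Phi p) (supp f)"
  proof (rule inj_onI)
    fix s t assume "s \<in> supp f" "t \<in> supp f" "Phi p s = Phi p t"
    then show "s = t" using Phi_psi_fun[OF vf] by metis
  qed
  have sG: "supp G = Phi p ` supp f"
  proof
    show "supp G \<subseteq> Phi p ` supp f" by (auto simp: supp_def G_def split: if_splits)
    show "Phi p ` supp f \<subseteq> supp G"
    proof
      fix x assume "x \<in> Phi p ` supp f"
      then obtain s where s: "s \<in> supp f" "x = Phi p s" by blast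
      have "f s \<noteq> 0" using s(1) by (simp add: supp_def)
      then have "G x \<noteq> 0" using GPhi[OF s(1)] C[OF s(1)] s(2) by simp
      then show "x \<in> supp G" by (simp add: supp_def)
    qed
  qed
  have "rho p G = f"
  proof
    fix m'
    have "rho p G m' = (\<Sum>x\<in>supp G. G x * smono_img (Sodd p) (rho_gen p) x m')"
      by (simp add: rho_def sext_def)
    also have "\<dots> = (\<Sum>s\<in>supp f. G (Phi p s) * smono_img (Sodd p) (rho_gen p) (Phi p s) m')"
      unfolding sG by (rule sum.reindex[OF inj, unfolded comp_def])
    also have "\<dots> = (\<Sum>s\<in>supp f. if m' = s then f s else 0)"
    proof (rule sum.cong)
      fix s assume s: "s \<in> supp f"
      show "G (Phi p s) * smono_img (Sodd p) (rho_gen p) (Phi p s) m' = (if m' = s then f s else 0)"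
        using GPhi[OF s] C[OF s] by (simp add: mon_def)
    qed simp
    also have "\<dots> = f m'" using fs by (simp add: supp_def)
    finally show "rho p G m' = f m'" .
  qed
  moreover have "G \<in> Fil_A p i"
  proof -
    have "finite (supp G)" using sG fs by simp
    moreover have "\<forall>x\<in>supp G. valid_mono Avar (Aodd p) x \<and> mono_sum (Aweight p) x \<le> i"
      using sG vf wf Phi_valid Phi_weight by auto
    ultimately show ?thesis by (simp add: Fil_A_def A_p_iff)
  qed
  ultimately show ?thesis by blast
qed


theorem proposition4p5:
  fixes p :: nat
  assumes "prime p"
    and "CHAR('k::field) = p"
    and "card (UNIV :: 'k set) = p"
  shows "(E1 p (Fil_A p :: int \<Rightarrow> 'k Aelem set) \<and> E2 p (Fil_A p :: int \<Rightarrow> 'k Aelem set) \<and>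
          E3 p (Fil_A p :: int \<Rightarrow> 'k Aelem set) \<and> E4 p (Fil_A p :: int \<Rightarrow> 'k Aelem set) \<and>
          E5 p (Fil_A p :: int \<Rightarrow> 'k Aelem set) \<and> E6 p (Fil_A p :: int \<Rightarrow> 'k Aelem set))
         \<and> (\<forall>i::int. rho p ` (Fil_A p i :: 'k Aelem set) = Fil_S p i)"
proof -
  have p1: "1 \<le> p" using prime_gt_0_nat[OF assms(1)] by simp
  have B: "rho p ` (Fil_A p i :: 'k Aelem set) = Fil_S p i" for i :: int
  proof
    show "rho p ` (Fil_A p i :: 'k Aelem set) \<subseteq> Fil_S p i"
    proof
      fix y assume "y \<in> rho p ` (Fil_A p i :: 'k Aelem set)"
      then obtain f :: "'k Aelem" where "f \<in> Fil_A p i" "y = rho p f" by blast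
      then show "y \<in> Fil_S p i" using rho_sub[OF p1] by simp
    qed
    show "Fil_S p i \<subseteq> rho p ` (Fil_A p i :: 'k Aelem set)"
    proof
      fix f :: "'k Selem" assume "f \<in> Fil_S p i"
      then show "f \<in> rho p ` (Fil_A p i :: 'k Aelem set)" by (rule rho_surj[OF p1])
    qed
  qed
  show ?thesis
    apply (intro conjI allI)
          apply (rule E1_Fil)
         apply (rule E2_Fil)
        apply (rule E3_Fil[OF p1])
       apply (rule E4_Fil[OF p1])
      apply (rule E5_Fil)
     apply (rule E6_Fil[OF assms(1)])
    apply (rule B)
    done
qed

end
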